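(* Let $\mu=\prod_{n=1}^{\infty}\nu_n$ be a centered probability measure on $[0,1]^{\mathbb{N}}$ (in the sense defined in the context). Then $\mu(\mathcal{C}_I)=0$; that is, for $\mu$-almost every sequence $(p_i)_{i=1}^\infty$ the Condorcet Jury Property fails.
   Context: For a sequence $(p_i)_{i=1}^\infty\in[0,1]^{\mathbb{N}}$ let $X_1,X_2,\dots$ be independent random variables with values in $\{0,1\}$ and $\mathbb{P}(X_i=1)=p_i$. The sequence satisfies the Condorcet Jury Property (CJP) if $\lim_{n\to\infty,\ n\text{ odd}}\mathbb{P}\left(\sum_{i=1}^n X_i>\frac n2\right)=1$. $\mathcal{C}_I\subset[0,1]^{\mathbb{N}}$ denotes the set of sequences satisfying the CJP. All measures are Borel probability measures; $\nu\ll\nu'$ denotes absolute continuity. Hellinger integral: for probability measures $\nu,\nu'$ on $[0,1]$, $H(\nu,\nu')=\int_{[0,1]}\sqrt{\frac{d\nu}{d\tau}\frac{d\nu'}{d\tau}}\,d\tau$ for any measure $\tau$ with $\nu,\nu'\ll\tau$. Class $\mathcal{D}$: a function $d$ on pairs of probability measures on $[0,1]$ which is either a divergence ($d(\nu,\nu')\ge 0$ with equality iff $\nu=\nu'$) or a distance (a metric) belongs to $\mathcal{D}$ if there is a constant $C>0$ with $1-H(\nu,\nu')\le C\, d(\nu,\nu')$ for all $\nu,\nu'$. (E.g. total variation distance and Kullback–Leibler divergence belong to $\mathcal{D}$.) Centered measure: a product probability measure $\mu=\prod_{n=1}^\infty\nu_n$ on $[0,1]^{\mathbb{N}}$ is centered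 if there is a probability measure $\nu_0$ on $[0,1]$ such that $\nu_n\ll\nu_0$ for all $n\ge1$, $\int_{[0,1]}x\,d\nu_0(x)=\frac12$, and $\sum_{n=1}^\infty d(\nu_n,\nu_0)<\infty$ for some $d\in\mathcal{D}$. *)

theory Defs
  imports "HOL-Probability.Probability"
begin

definition prob_on_unit :: "real measure \<Rightarrow> bool" where
  "prob_on_unit \<nu> \<longleftrightarrow> prob_space \<nu> \<and> space \<nu> = {0..1} \<and>
     sets \<nu> = sets (restrict_space borel {0..1::real})"

text \<open>The sum measure nu + nu', which dominates both nu and nu'.\<close>
definition sum_meas :: "real measure \<Rightarrow> real measure \<Rightarrow> real measure" where
  "sum_meas \<nu> \<nu>' = measure_of (space \<nu>) (sets \<nu>) (\<lambda>A. emeasure \<nu> A + emeasure \<nu>' A)"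

text \<open>Hellinger integral H(nu,nu'), computed with the dominating measure tau = nu + nu'
  (the value does not depend on the choice of tau).\<close>
definition hellinger :: "real measure \<Rightarrow> real measure \<Rightarrow> real" where
  "hellinger \<nu> \<nu>' = (let \<tau> = sum_meas \<nu> \<nu>' in
     (\<integral>x. sqrt (enn2real (RN_deriv \<tau> \<nu> x) * enn2real (RN_deriv \<tau> \<nu>' x)) \<partial>\<tau>))"

definition is_divergence :: "(real measure \<Rightarrow> real measure \<Rightarrow> ennreal) \<Rightarrow> bool" where
  "is_divergence d \<longleftrightarrow>
     (\<forall>\<nu> \<nu>'. prob_on_unit \<nu> \<longrightarrow> prob_on_unit \<nu>' \<longrightarrow> (d \<nu> \<nu>' = 0 \<longleftrightarrow> \<nu> = \<nu>'))"

definition is_distance :: "(real measure \<Rightarrow> real measure \<Rightarrow> ennreal) \<Rightarrow> bool" where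
  "is_distance d \<longleftrightarrow>
     (\<forall>\<nu> \<nu>'. prob_on_unit \<nu> \<longrightarrow> prob_on_unit \<nu>' \<longrightarrow>
        d \<nu> \<nu>' < \<top> \<and> (d \<nu> \<nu>' = 0 \<longleftrightarrow> \<nu> = \<nu>') \<and> d \<nu> \<nu>' = d \<nu>' \<nu>) \<and>
     (\<forall>\<nu> \<nu>' \<nu>''. prob_on_unit \<nu> \<longrightarrow> prob_on_unit \<nu>' \<longrightarrow> prob_on_unit \<nu>'' \<longrightarrow>
        d \<nu> \<nu>'' \<le> d \<nu> \<nu>' + d \<nu>' \<nu>'')"

definition class_D :: "(real measure \<Rightarrow> real measure \<Rightarrow> ennreal) set" where
  "class_D = {d. (is_divergence d \<or> is_distance d) \<and>
     (\<exists>C::real. C > 0 \<and> (\<forall>\<nu> \<nu>'. prob_on_unit \<nu> \<longrightarrow> prob_on_unit \<nu>' \<longrightarrow>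
        ennreal (1 - hellinger \<nu> \<nu>') \<le> ennreal C * d \<nu> \<nu>'))}"

text \<open>Centered product measure prod_n nu_n (index n = 0,1,2,... stands for 1,2,3,...).\<close>
definition centered :: "(nat \<Rightarrow> real measure) \<Rightarrow> bool" where
  "centered \<nu> \<longleftrightarrow> (\<forall>n. prob_on_unit (\<nu> n)) \<and>
     (\<exists>\<nu>0. prob_on_unit \<nu>0 \<and> (\<forall>n. absolutely_continuous \<nu>0 (\<nu> n)) \<and>
        (\<integral>x. x \<partial>\<nu>0) = 1/2 \<and>
        (\<exists>d \<in> class_D. (\<Sum>n. d (\<nu> n) \<nu>0) < \<top>))"

definition maj_prob :: "(nat \<Rightarrow> real) \<Rightarrow> nat \<Rightarrow> real" where
  "maj_prob p n = measure_pmf.prob (Pi_pmf {..<n} False (\<lambda>i. bernoulli_pmf (p i)))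
      {X. real (card {i \<in> {..<n}. X i}) > real n / 2}"

definition CJP_set :: "(nat \<Rightarrow> real) set" where
  "CJP_set = {p. (\<forall>i. p i \<in> {0..1}) \<and> (\<lambda>k. maj_prob p (2*k+1)) \<longlonglongrightarrow> 1}"

end

theory Submission
  imports Defs
begin

fun G :: "(nat \<Rightarrow> real) \<Rightarrow> nat \<Rightarrow> nat \<Rightarrow> real \<Rightarrow> real" where
  "G p a 0 t = (if t < 0 then 1 else 0)"
| "G p a (Suc k) t = p (a+k) * G p a k (t-1) + (1 - p (a+k)) * G p a k t"

definition unitseq :: "(nat \<Rightarrow> real) \<Rightarrow> bool" where
  "unitseq p \<longleftrightarrow> (\<forall>i. 0 \<le> p i \<and> p i \<le> 1)"

lemma G_bounds:
  assumes "unitseq p"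
  shows "0 \<le> G p a k t \<and> G p a k t \<le> 1"
proof (induction k arbitrary: t)
  case 0 then show ?case by simp
next
  case (Suc k)
  have p: "0 \<le> p (a+k)" "p (a+k) \<le> 1" using assms unfolding unitseq_def by auto
  have a: "0 \<le> G p a k (t-1)" "G p a k (t-1) \<le> 1" "0 \<le> G p a k t" "G p a k t \<le> 1" using Suc by auto
  have "p (a+k) * G p a k (t-1) + (1 - p (a+k)) * G p a k t \<le> p (a+k) * 1 + (1 - p (a+k)) * 1"
    by (intro add_mono mult_left_mono) (use p a in auto)
  moreover have "0 \<le> p (a+k) * G p a k (t-1) + (1 - p (a+k)) * G p a k t"
    using p a by simp
  ultimately show ?case by simp
qed

lemma G_anti:
  assumes "unitseq p" "t \<le> t'"
  shows "G p a k t' \<le> G p a k t"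
  using assms(2)
proof (induction k arbitrary: t t')
  case 0 then show ?case by simp
next
  case (Suc k)
  have p: "0 \<le> p (a+k)" "p (a+k) \<le> 1" using assms unfolding unitseq_def by auto
  have "G p a k (t'-1) \<le> G p a k (t-1)" "G p a k t' \<le> G p a k t" using Suc by auto
  then show ?case using p by (simp add: add_mono mult_left_mono)
qed

lemma G_zero:
  assumes "unitseq p" "real k \<le> t"
  shows "G p a k t = 0"
  using assms(2)
proof (induction k arbitrary: t)
  case 0 then show ?case by simp
next
  case (Suc k)
  then have "G p a k (t-1) = 0" "G p a k t = 0" by auto
  then show ?case by simp
qed

lemma G_shift:
  assumes "unitseq p"
  shows "G p 0 (m + k) t \<le> G p m k (t - real m)"
proof (induction k arbitrary: t)
  case 0
  show ?case
  proof (cases "t < real m")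
    case True then show ?thesis using G_bounds[OF assms, of 0 m t] by simp
  next
    case False then show ?thesis using G_zero[OF assms, of m t 0] by simp
  qed
next
  case (Suc k)
  have p: "0 \<le> p (m+k)" "p (m+k) \<le> 1" using assms unfolding unitseq_def by auto
  have "G p 0 (m + Suc k) t = p (m+k) * G p 0 (m+k) (t-1) + (1 - p (m+k)) * G p 0 (m+k) t"
    by simp
  also have "\<dots> \<le> p (m+k) * G p m k (t-1-real m) + (1 - p (m+k)) * G p m k (t - real m)"
    using Suc[of "t-1"] Suc[of t] p by (intro add_mono mult_left_mono) auto
  also have "\<dots> = G p m (Suc k) (t - real m)" by (simp add: algebra_simps)
  finally show ?case .
qed

lemma aux_ineq:
  fixes B1 B2 e :: real
  assumes "B1 \<le> B2" "0 \<le> e"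
  shows "(1+e)/2*B1 + (1-e)/2*B2 \<le> 1/2*B1 + 1/2*B2"
proof -
  have "e * B1 \<le> e * B2" using assms by (simp add: mult_left_mono)
  then show ?thesis by (simp add: field_simps)
qed

lemma G_dom:
  assumes "unitseq q" "unitseq e" "\<And>i. q i \<le> (1 + e i) / 2"
  shows "G q a k t \<le> G (\<lambda>_. 1/2) a k (t - L) + G e a k L"
proof (induction k arbitrary: t L)
  case 0
  then show ?case by auto
next
  case (Suc k)
  have h: "unitseq (\<lambda>_. 1/2)" unfolding unitseq_def by auto
  let ?q = "q (a+k)" and ?e = "e (a+k)"
  let ?B = "G (\<lambda>_. 1/2) a k" and ?E = "G e a k" and ?Q = "G q a k"
  have q: "0 \<le> ?q" "?q \<le> 1" "?q \<le> (1 + ?e)/2" using assms unfolding unitseq_def by auto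
  have e: "0 \<le> ?e" "?e \<le> 1" using assms unfolding unitseq_def by auto
  have mono: "?Q t \<le> ?Q (t-1)" using G_anti[OF assms(1), of "t-1" t] by simp
  have "?Q (Suc 0 + k - 1) = ?Q k" by simp
  have "G q a (Suc k) t = ?q * ?Q (t-1) + (1 - ?q) * ?Q t" by simp
  also have "\<dots> \<le> ((1 + ?e)/2) * ?Q (t-1) + (1 - (1 + ?e)/2) * ?Q t"
  proof -
    have "?q * ?Q (t-1) + (1 - ?q) * ?Q t = ?Q t + ?q * (?Q (t-1) - ?Q t)" by algebra
    also have "\<dots> \<le> ?Q t + ((1 + ?e)/2) * (?Q (t-1) - ?Q t)"
      using mono q by (intro add_left_mono mult_right_mono) auto
    also have "\<dots> = ((1 + ?e)/2) * ?Q (t-1) + (1 - (1 + ?e)/2) * ?Q t" by algebra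
    finally show ?thesis .
  qed
  also have "\<dots> = ?e * ?Q (t-1) + ((1 - ?e)/2) * ?Q (t-1) + ((1 - ?e)/2) * ?Q t"
    by (simp add: field_simps)
  also have "\<dots> \<le> ?e * (?B (t-1-(L-1)) + ?E (L-1)) + ((1 - ?e)/2) * (?B (t-1-L) + ?E L)
      + ((1 - ?e)/2) * (?B (t-L) + ?E L)"
    using Suc[of "t-1" "L-1"] Suc[of "t-1" L] Suc[of t L] e
    by (intro add_mono mult_left_mono) auto
  also have "\<dots> = ((1 + ?e)/2) * ?B (t-L) + ((1 - ?e)/2) * ?B (t-L-1) + (?e * ?E (L-1) + (1 - ?e) * ?E L)"
    by (simp add: field_simps)
  also have "\<dots> \<le> (1/2) * ?B (t-L) + (1/2) * ?B (t-L-1) + (?e * ?E (L-1) + (1 - ?e) * ?E L)"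
  proof -
    have m: "?B (t-L) \<le> ?B (t-L-1)" using G_anti[OF h, of "t-L-1" "t-L"] by simp
    show ?thesis using aux_ineq[OF m e(1)] by linarith
  qed
  also have "\<dots> = G (\<lambda>_. 1/2) a (Suc k) (t - L) + G e a (Suc k) L"
    by (simp add: algebra_simps)
  finally show ?case .
qed

lemma G_markov:
  assumes "unitseq e" "0 \<le> L"
  shows "L * G e a k L \<le> (\<Sum>i<k. e (a+i))"
  using assms(2)
proof (induction k arbitrary: L)
  case 0 then show ?case by simp
next
  case (Suc k)
  let ?e = "e (a+k)" and ?s = "\<Sum>i<k. e (a+i)"
  have e: "0 \<le> ?e" "?e \<le> 1" using assms unfolding unitseq_def by auto
  have s: "0 \<le> ?s" using assms unfolding unitseq_def by (auto intro: sum_nonneg)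
  have b: "0 \<le> G e a k (L-1)" "G e a k (L-1) \<le> 1" "0 \<le> G e a k L" using G_bounds[OF assms(1)] by auto
  have IH: "L * G e a k L \<le> ?s" using Suc by auto
  have "L * G e a (Suc k) L = ?e * (L * G e a k (L-1)) + (1 - ?e) * (L * G e a k L)"
    by (simp add: algebra_simps)
  also have "\<dots> \<le> ?e * (1 + ?s) + (1 - ?e) * ?s"
  proof (intro add_mono mult_left_mono)
    show "L * G e a k (L-1) \<le> 1 + ?s"
    proof (cases "L < 1")
      case True
      then have "L * G e a k (L-1) \<le> 1 * 1" using b Suc.prems by (intro mult_mono) auto
      then show ?thesis using s by simp
    next
      case False
      then have "(L-1) * G e a k (L-1) \<le> ?s" using Suc.IH[of "L-1"] by auto
      then show ?thesis using b by (simp add: algebra_simps)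
    qed
  qed (use e IH in auto)
  also have "\<dots> = (\<Sum>i<Suc k. e (a+i))" by (simp add: algebra_simps)
  finally show ?case .
qed

lemma G_cong:
  assumes "\<And>i. a \<le> i \<Longrightarrow> i < a + k \<Longrightarrow> p i = p' i"
  shows "G p a k t = G p' a k t"
  using assms
proof (induction k arbitrary: t)
  case 0 then show ?case by simp
next
  case (Suc k)
  then have "\<And>t. G p a k t = G p' a k t" by auto
  moreover have "p (a+k) = p' (a+k)" using Suc.prems by auto
  ultimately show ?case by simp
qed

lemma K1:
  assumes e: "0 \<le> e" "e \<le> 1"
  shows "measure_pmf.prob (bind_pmf (bernoulli_pmf e) (\<lambda>b. map_pmf (\<lambda>k. of_bool b + k) D)) {j::nat. t < real j}
       = e * measure_pmf.prob D {j. t - 1 < real j} + (1-e) * measure_pmf.prob D {j. t < real j}"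
proof -
  let ?A = "{j::nat. t < real j}"
  have pre1: "(\<lambda>k. of_bool True + k) -` ?A = {j. t - 1 < real j}" by auto
  have pre0: "(\<lambda>k. of_bool False + k) -` ?A = {j. t < real j}" by auto
  have "ennreal (measure_pmf.prob (bind_pmf (bernoulli_pmf e) (\<lambda>b. map_pmf (\<lambda>k. of_bool b + k) D)) ?A)
      = emeasure (bind_pmf (bernoulli_pmf e) (\<lambda>b. map_pmf (\<lambda>k. of_bool b + k) D)) ?A"
    by (simp add: measure_pmf.emeasure_eq_measure)
  also have "\<dots> = (\<integral>\<^sup>+b. emeasure (map_pmf (\<lambda>k. of_bool b + k) D) ?A \<partial>bernoulli_pmf e)"
    by simp
  also have "\<dots> = emeasure (map_pmf (\<lambda>k. of_bool True + k) D) ?A * e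
      + emeasure (map_pmf (\<lambda>k. of_bool False + k) D) ?A * (1 - e)"
    using e by (subst nn_integral_bernoulli_pmf) auto
  also have "\<dots> = ennreal (measure_pmf.prob D {j. t - 1 < real j}) * ennreal e
      + ennreal (measure_pmf.prob D {j. t < real j}) * ennreal (1 - e)"
    unfolding emeasure_map_pmf pre1 pre0 using e by (simp add: measure_pmf.emeasure_eq_measure)
  also have "\<dots> = ennreal (e * measure_pmf.prob D {j. t - 1 < real j} + (1-e) * measure_pmf.prob D {j. t < real j})"
    using e by (simp add: ennreal_mult'[symmetric] ennreal_plus[symmetric] mult.commute del: ennreal_plus)
  finally show ?thesis using e by (subst (asm) ennreal_inj) auto
qed

definition vote_dist :: "(nat \<Rightarrow> real) \<Rightarrow> nat \<Rightarrow> nat pmf" where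
  "vote_dist p n = map_pmf (\<lambda>X. card {i \<in> {..<n}. X i}) (Pi_pmf {..<n} False (\<lambda>i. bernoulli_pmf (p i)))"

lemma vote_dist_Suc:
  "vote_dist p (Suc n) = bind_pmf (bernoulli_pmf (p n)) (\<lambda>b. map_pmf (\<lambda>k. of_bool b + k) (vote_dist p n))"
proof -
  have c: "card {i \<in> {..<Suc n}. (f(n := y)) i} = of_bool y + card {i \<in> {..<n}. f i}" for f :: "nat \<Rightarrow> bool" and y
  proof -
    have "{i \<in> {..<Suc n}. (f(n := y)) i} = {i \<in> {..<n}. f i} \<union> (if y then {n} else {})"
      by (auto simp: less_Suc_eq)
    then show ?thesis by (auto simp: card_insert_if)
  qed
  have "vote_dist p (Suc n) = map_pmf (\<lambda>X. card {i \<in> {..<Suc n}. X i})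
      (bind_pmf (bernoulli_pmf (p n)) (\<lambda>y. bind_pmf (Pi_pmf {..<n} False (\<lambda>i. bernoulli_pmf (p i))) (\<lambda>f. return_pmf (f(n := y)))))"
    unfolding vote_dist_def lessThan_Suc by (subst Pi_pmf_insert') auto
  also have "\<dots> = bind_pmf (bernoulli_pmf (p n)) (\<lambda>b. map_pmf (\<lambda>k. of_bool b + k) (vote_dist p n))"
    unfolding vote_dist_def
    by (simp only: map_bind_pmf map_return_pmf c) (simp add: map_pmf_def bind_assoc_pmf bind_return_pmf)
  finally show ?thesis .
qed

lemma G_vote:
  assumes "unitseq p"
  shows "G p 0 n t = measure_pmf.prob (vote_dist p n) {j. t < real j}"
proof (induction n arbitrary: t)
  case 0
  have "vote_dist p 0 = return_pmf 0" unfolding vote_dist_def by simp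
  then show ?case by (simp add: indicator_def)
next
  case (Suc n)
  have e: "0 \<le> p n" "p n \<le> 1" using assms unfolding unitseq_def by auto
  show ?case unfolding vote_dist_Suc K1[OF e] using Suc by simp
qed

lemma maj_prob_G:
  assumes "unitseq p"
  shows "maj_prob p n = G p 0 n (real n / 2)"
proof -
  have "maj_prob p n = measure_pmf.prob (vote_dist p n) {j. real n / 2 < real j}"
    unfolding maj_prob_def vote_dist_def measure_map_pmf by (simp add: vimage_def)
  then show ?thesis using G_vote[OF assms] by simp
qed

lemma G_binom:
  "G (\<lambda>_. 1/2) a k t = measure_pmf.prob (binomial_pmf k (1/2)) {j. t < real j}"
proof (induction k arbitrary: t)
  case 0
  then show ?case by (simp add: binomial_pmf_0 indicator_def)
next
  case (Suc k)
  have "binomial_pmf (Suc k) (1/2) = bind_pmf (bernoulli_pmf (1/2)) (\<lambda>b. map_pmf (\<lambda>k. of_bool b + k) (binomial_pmf k (1/2)))"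
    by (subst binomial_pmf_Suc) (auto simp: map_pmf_def of_bool_def)
  then show ?case using K1[where e="1/2" and t=t and D="binomial_pmf k (1/2)"] Suc by simp
qed

lemma central_rec: "Suc k * ((2 * Suc k) choose Suc k) = 2 * (2*k+1) * ((2*k) choose k)"
proof -
  have e: "2 * Suc k = Suc (2*k+1)" by simp
  have a: "Suc k * ((2 * Suc k) choose Suc k) = Suc (2*k+1) * ((2*k+1) choose k)"
    unfolding e by (rule Suc_times_binomial)
  have b: "(2*k+1) choose k = (2*k+1) choose (Suc k)"
    using binomial_symmetric[of k "2*k+1"] by (simp del: binomial_Suc_Suc)
  have e2: "2*k+1 = Suc (2*k)" by simp
  have c: "Suc k * ((2*k+1) choose Suc k) = (2*k+1) * ((2*k) choose k)"
    unfolding e2 by (rule Suc_times_binomial)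
  have "Suc k * (Suc k * ((2 * Suc k) choose Suc k)) = Suc (2*k+1) * (Suc k * ((2*k+1) choose Suc k))"
    unfolding a b by (simp only: mult.left_commute)
  also have "\<dots> = Suc k * (2 * (2*k+1) * ((2*k) choose k))"
    unfolding c by simp
  finally show ?thesis by (simp only: mult_cancel1) simp
qed

lemma odd_central: "Suc k * ((2*k+1) choose k) = (2*k+1) * ((2*k) choose k)"
proof -
  have b: "(2*k+1) choose k = (2*k+1) choose (Suc k)"
    using binomial_symmetric[of k "2*k+1"] by (simp del: binomial_Suc_Suc)
  have e2: "2*k+1 = Suc (2*k)" by simp
  have c: "Suc k * ((2*k+1) choose Suc k) = (2*k+1) * ((2*k) choose k)"
    unfolding e2 by (rule Suc_times_binomial)
  show ?thesis by (subst b) (fact c)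
qed
lemma central_sq: "real ((2*k) choose k) ^ 2 * (2*k+1) \<le> 16 ^ k"
proof (induction k)
  case 0 then show ?case by simp
next
  case (Suc k)
  let ?c = "real ((2*k) choose k)" and ?d = "real ((2 * Suc k) choose Suc k)"
  have r0: "real (Suc k * ((2 * Suc k) choose Suc k)) = real (2 * (2*k+1) * ((2*k) choose k))"
    by (simp only: central_rec)
  have r1: "(1 + real k) * ?d = 2 * (2*real k+1) * ?c"
    using r0 by (simp only: of_nat_mult of_nat_Suc of_nat_add of_nat_numeral of_nat_1)
  then have r: "(real k+1) * ?d = 2 * (2*real k+1) * ?c" by (simp add: add.commute)
  have "(real k+1)^2 * (?d^2 * real (2 * Suc k + 1)) = ((real k+1) * ?d)^2 * (2*real k+3)"
    by (simp add: power2_eq_square algebra_simps)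
  also have "\<dots> = (2 * (2*real k+1) * ?c)^2 * (2*real k+3)" by (simp only: r)
  also have "\<dots> = (?c^2 * real (2*k+1)) * (4 * (2*real k+1) * (2*real k+3))"
    by (simp add: power2_eq_square algebra_simps)
  also have "\<dots> \<le> 16^k * (4 * (2*real k+1) * (2*real k+3))"
    using Suc by (intro mult_right_mono) auto
  also have "\<dots> \<le> 16^k * (16 * (real k+1)^2)"
    by (intro mult_left_mono) (auto simp: power2_eq_square algebra_simps)
  also have "\<dots> = (real k+1)^2 * 16 ^ Suc k" by simp
  finally have f: "(real k+1)^2 * (?d^2 * real (2 * Suc k + 1)) \<le> (real k+1)^2 * 16 ^ Suc k" .
  have pos: "0 < (real k+1)^2" by simp
  show ?case using mult_left_le_imp_le[OF f pos] .
qed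

lemma binom_sq_bound: "real (N choose j) ^ 2 * N \<le> 4 ^ N"
proof -
  have m: "real (N choose j) \<le> real (N choose (N div 2))" using binomial_maximum by simp
  have m2: "real (N choose j) ^ 2 * N \<le> real (N choose (N div 2)) ^ 2 * N"
    using m by (intro mult_right_mono power_mono) auto
  obtain k where "N = 2*k \<or> N = 2*k+1" by (metis oddE evenE)
  then consider "N = 2*k" | "N = 2*k+1" by blast
  then show ?thesis
  proof cases
    case 1
    then have "N div 2 = k" by simp
    then have "real (N choose (N div 2)) ^ 2 * N = real ((2*k) choose k) ^ 2 * real N"
      using 1 by simp
    also have "\<dots> \<le> real ((2*k) choose k) ^ 2 * (2*k+1)"
      using 1 by (intro mult_left_mono) auto
    also have "\<dots> \<le> 16^k" by (rule central_sq)
    also have "\<dots> = 4 ^ N" using 1 by (simp add: power_mult)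
    finally show ?thesis using m2 by linarith
  next
    case 2
    then have "N div 2 = k" by simp
    have o: "(k+1) * real ((2*k+1) choose k) = (2*k+1) * real ((2*k) choose k)"
    proof -
    have "real (Suc k * ((2*k+1) choose k)) = real ((2*k+1) * ((2*k) choose k))"
      by (simp only: odd_central)
    then show ?thesis unfolding of_nat_mult by simp
  qed
    have le: "real ((2*k+1) choose k) \<le> 2 * real ((2*k) choose k)"
    proof -
      have "(k+1) * real ((2*k+1) choose k) \<le> (k+1) * (2 * real ((2*k) choose k))"
        using o by (simp add: algebra_simps)
      then show ?thesis by (rule mult_left_le_imp_le) auto
    qed
    have "real (N choose (N div 2)) ^ 2 * N = real ((2*k+1) choose k) ^ 2 * (2*k+1)"
      using 2 \<open>N div 2 = k\<close> by simp
    also have "\<dots> \<le> (2 * real ((2*k) choose k)) ^ 2 * (2*k+1)"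
      using le by (intro mult_right_mono power_mono) auto
    also have "\<dots> = 4 * (real ((2*k) choose k) ^ 2 * (2*k+1))" by (simp add: power2_eq_square)
    also have "\<dots> \<le> 4 * 16^k" using central_sq[of k] by simp
    also have "\<dots> = 4 ^ N" using 2 by (simp add: power_mult power_add)
    finally show ?thesis using m2 by linarith
  qed
qed

lemma pmf_binom_half: "pmf (binomial_pmf N (1/2)) j = real (N choose j) / 2 ^ N"
proof (cases "j \<le> N")
  case True
  then have "(1/2::real) ^ j * (1 - 1/2) ^ (N - j) = 1 / 2 ^ N"
    by (simp add: power_add[symmetric] power_one_over)
  then have "real (N choose j) * (1/2) ^ j * (1/2) ^ (N - j) = real (N choose j) / 2 ^ N"
    by (simp only: mult.assoc) simp
  then show ?thesis by simp
next
  case False then show ?thesis by (simp add: binomial_eq_0)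
qed

lemma pmf_binom_half_le:
  assumes "N \<ge> 1"
  shows "pmf (binomial_pmf N (1/2)) j \<le> 1 / sqrt N"
proof -
  let ?x = "real (N choose j) / 2 ^ N"
  have p4: "(2::real)^N * 2^N = 4^N"
  proof -
    have "(2::real)^N * 2^N = (2*2)^N" by (simp only: power_mult_distrib)
    then show ?thesis by simp
  qed
  have "?x ^ 2 * N = real (N choose j) ^ 2 * N / 4^N"
    unfolding p4[symmetric] by (simp add: power2_eq_square)
  also have "\<dots> \<le> 1" using binom_sq_bound[of N j] by simp
  finally have "?x ^ 2 * N \<le> 1" .
  then have "?x ^ 2 \<le> 1 / N" using assms by (simp add: field_simps)
  then have "sqrt (?x^2) \<le> sqrt (1 / N)" by (rule real_sqrt_le_mono)
  then have "?x \<le> 1 / sqrt N" by (simp add: real_sqrt_divide)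
  then show ?thesis by (simp add: pmf_binom_half)
qed

lemma card_T3:
  fixes x K :: real
  assumes "0 \<le> K"
  shows "real (card {j::nat. x - K < real j \<and> real j \<le> x}) \<le> K + 1"
proof -
  define l where "l = nat (\<lfloor>x - K\<rfloor> + 1)"
  define u where "u = nat \<lfloor>x\<rfloor>"
  have sub: "{j::nat. x - K < real j \<and> real j \<le> x} \<subseteq> {l..u}"
  proof
    fix j assume "j \<in> {j::nat. x - K < real j \<and> real j \<le> x}"
    then have j: "x - K < real j" "real j \<le> x" by auto
    have "\<lfloor>x - K\<rfloor> < int j" using j(1) by linarith
    then have "l \<le> j" unfolding l_def by linarith
    moreover have "int j \<le> \<lfloor>x\<rfloor>" using j(2) by linarith
    then have "j \<le> u" unfolding u_def by linarith
    ultimately show "j \<in> {l..u}" by auto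
  qed
  have "card {j::nat. x - K < real j \<and> real j \<le> x} \<le> card {l..u}"
    by (rule card_mono[OF _ sub]) auto
  also have "card {l..u} = Suc u - l" by simp
  finally have c: "real (card {j::nat. x - K < real j \<and> real j \<le> x}) \<le> real (Suc u - l)" by simp
  show ?thesis
  proof (cases "l \<le> Suc u")
    case True
    then have "real (Suc u - l) = real u + 1 - real l" by (simp add: of_nat_diff)
    moreover have "real l \<ge> x - K"
    proof -
      have "real_of_int (\<lfloor>x - K\<rfloor> + 1) \<ge> x - K" by linarith
      then show ?thesis unfolding l_def by linarith
    qed
    moreover have "real u \<le> x \<or> u = 0"
      unfolding u_def by (cases "\<lfloor>x\<rfloor> \<ge> 0") linarith+
    moreover have "u = 0 \<Longrightarrow> real (Suc u - l) \<le> 1" by (cases l) auto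
    ultimately show ?thesis using c assms by auto
  next
    case False
    then show ?thesis using c assms by simp
  qed
qed

lemma binom_anti:
  fixes K :: real
  assumes N: "N \<ge> 1" and K: "0 \<le> K"
  shows "measure_pmf.prob (binomial_pmf N (1/2)) {j. real N / 2 - K < real j} \<le> 1/2 + (K+1) / sqrt N"
proof -
  let ?M = "binomial_pmf N (1/2)"
  define T1 where "T1 = {j. j \<le> N \<and> real N / 2 < real j}"
  define T2 where "T2 = {j. j \<le> N \<and> real j < real N / 2}"
  define T3 where "T3 = {j. j \<le> N \<and> real N / 2 - K < real j \<and> real j \<le> real N / 2}"
  have fin: "finite T1" "finite T2" "finite T3" unfolding T1_def T2_def T3_def by auto
  have sp: "set_pmf ?M = {..N}" by (rule set_pmf_binomial) auto
  have "measure_pmf.prob ?M {j. real N / 2 - K < real j} = measure_pmf.prob ?M ({j. real N / 2 - K < real j} \<inter> set_pmf ?M)"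
    by (rule measure_Int_set_pmf[symmetric])
  also have "\<dots> \<le> measure_pmf.prob ?M (T1 \<union> T3)"
    by (rule measure_pmf.finite_measure_mono) (auto simp: sp T1_def T3_def)
  also have "\<dots> \<le> measure_pmf.prob ?M T1 + measure_pmf.prob ?M T3"
    by (rule measure_subadditive) auto
  also have "measure_pmf.prob ?M T1 \<le> 1/2"
  proof -
    have bij: "bij_betw (\<lambda>j. N - j) T2 T1"
      by (rule bij_betw_byWitness[where f'="\<lambda>j. N - j"]) (auto simp: T1_def T2_def of_nat_diff)
    have "measure_pmf.prob ?M T2 = (\<Sum>j\<in>T2. pmf ?M j)" using fin by (simp add: measure_measure_pmf_finite)
    also have "\<dots> = (\<Sum>j\<in>T2. pmf ?M (N - j))"
      by (rule sum.cong) (auto simp: T2_def pmf_binom_half binomial_symmetric[symmetric])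
    also have "\<dots> = (\<Sum>j\<in>T1. pmf ?M j)" by (rule sum.reindex_bij_betw[OF bij])
    also have "\<dots> = measure_pmf.prob ?M T1" using fin by (simp add: measure_measure_pmf_finite)
    finally have eq: "measure_pmf.prob ?M T2 = measure_pmf.prob ?M T1" .
    have "measure_pmf.prob ?M T1 + measure_pmf.prob ?M T2 = measure_pmf.prob ?M (T1 \<union> T2)"
      by (rule measure_pmf.finite_measure_Union[symmetric]) (auto simp: T1_def T2_def)
    also have "\<dots> \<le> 1" by (rule measure_pmf.prob_le_1)
    finally show ?thesis using eq by simp
  qed
  also have "measure_pmf.prob ?M T3 \<le> (K+1) / sqrt N"
  proof -
    have "measure_pmf.prob ?M T3 = (\<Sum>j\<in>T3. pmf ?M j)" using fin by (simp add: measure_measure_pmf_finite)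
    also have "\<dots> \<le> real (card T3) * (1 / sqrt N)"
      using sum_bounded_above[of T3 "pmf ?M" "1 / sqrt N"] pmf_binom_half_le[OF N] by simp
    also have "\<dots> \<le> (K+1) * (1 / sqrt N)"
    proof (intro mult_right_mono)
      have "T3 \<subseteq> {j::nat. real N / 2 - K < real j \<and> real j \<le> real N / 2}" unfolding T3_def by auto
      then have "card T3 \<le> card {j::nat. real N / 2 - K < real j \<and> real j \<le> real N / 2}"
        by (rule card_mono[rotated]) (rule finite_subset[of _ "{..N}"], auto)
      then show "real (card T3) \<le> K + 1" using card_T3[OF K, of "real N / 2"] by linarith
    qed simp
    finally show ?thesis by simp
  qed
  finally show ?thesis by simp
qed

lemma AN:
  assumes q: "unitseq q"
    and small: "\<And>\<epsilon>. \<epsilon> > 0 \<Longrightarrow> \<exists>n0. \<forall>n\<ge>n0. (\<Sum>i<n. \<bar>q i - 1/2\<bar>) \<le> \<epsilon> * sqrt n"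
  shows "\<exists>n0. \<forall>n\<ge>n0. G q m (n - m) (real n / 2 - real m) \<le> 3/4"
proof -
  define e where "e i = 2 * max (q i - 1/2) 0" for i
  have ue: "unitseq e" unfolding unitseq_def
  proof
    fix i have "0 \<le> q i" "q i \<le> 1" using q unfolding unitseq_def by auto
    then show "0 \<le> e i \<and> e i \<le> 1" unfolding e_def by (auto simp: max_def)
  qed
  have qe: "q i \<le> (1 + e i) / 2" for i unfolding e_def by (auto simp: max_def)
  obtain n1 where n1: "\<And>n. n \<ge> n1 \<Longrightarrow> (\<Sum>i<n. \<bar>q i - 1/2\<bar>) \<le> (1/512) * sqrt n"
    using small[of "1/512"] by auto
  define n0 where "n0 = n1 + 2*m + 1 + m + nat \<lceil>256 * (real m/2 + 1)^2\<rceil>"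
  have "G q m (n - m) (real n / 2 - real m) \<le> 3/4" if n: "n \<ge> n0" for n
  proof -
    define N where "N = n - m"
    define L where "L = sqrt N / 8"
    have Nn: "real N = real n - real m" unfolding N_def using n n0_def by (simp add: of_nat_diff)
    have N1: "N \<ge> 1" using n unfolding N_def n0_def by simp
    have N2: "real N \<ge> real n / 2" using n unfolding Nn n0_def by simp
    have N3: "real N \<ge> 256 * (real m/2 + 1)^2"
    proof -
      have "real N \<ge> real (nat \<lceil>256 * (real m/2 + 1)^2\<rceil>)" using n unfolding N_def n0_def by simp
      moreover have "real (nat \<lceil>256 * (real m/2 + 1)^2\<rceil>) \<ge> 256 * (real m/2 + 1)^2" by linarith
      ultimately show ?thesis by linarith
    qed
    have sN: "sqrt N > 0" using N1 by simp
    have Lpos: "L > 0" unfolding L_def using sN by simp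
    have sN2: "sqrt N \<ge> 16 * (real m/2 + 1)"
    proof -
      have "sqrt (256 * (real m/2 + 1)^2) \<le> sqrt N" using N3 by (rule real_sqrt_le_mono)
      moreover have "sqrt (256 * (real m/2 + 1)^2) = 16 * (real m/2 + 1)"
        by (simp add: real_sqrt_mult)
      ultimately show ?thesis by simp
    qed
    have sn: "sqrt n \<le> 2 * sqrt N"
    proof -
      have "sqrt n \<le> sqrt (4 * N)" using N2 by (intro real_sqrt_le_mono) simp
      also have "\<dots> = 2 * sqrt N" by (simp add: real_sqrt_mult)
      finally show ?thesis .
    qed
    have S: "(\<Sum>i<n. \<bar>q i - 1/2\<bar>) \<le> (1/512) * sqrt n" using n1 n unfolding n0_def by simp
    have eS: "(\<Sum>i<N. e (m+i)) \<le> 2 * (\<Sum>i<n. \<bar>q i - 1/2\<bar>)"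
    proof -
      have "(\<Sum>i<N. e (m+i)) = (\<Sum>i\<in>(\<lambda>i. m+i) ` {..<N}. e i)"
        by (subst sum.reindex) (auto simp: inj_on_def)
      also have "\<dots> \<le> (\<Sum>i<n. e i)"
        by (rule sum_mono2) (use ue in \<open>auto simp: N_def unitseq_def\<close>)
      also have "\<dots> \<le> (\<Sum>i<n. 2 * \<bar>q i - 1/2\<bar>)"
        by (rule sum_mono) (auto simp: e_def)
      finally show ?thesis by (simp add: sum_distrib_left)
    qed
    have "G q m N (real n / 2 - real m) \<le> G (\<lambda>_. 1/2) m N (real n / 2 - real m - L) + G e m N L"
      by (rule G_dom[OF q ue qe])
    also have "G (\<lambda>_. 1/2) m N (real n / 2 - real m - L) \<le> 1/2 + (real m/2 + L + 1) / sqrt N"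
    proof -
      have "real n / 2 - real m - L = real N / 2 - (real m / 2 + L)" unfolding Nn by (simp add: field_simps)
      then have "G (\<lambda>_. 1/2) m N (real n / 2 - real m - L)
          = measure_pmf.prob (binomial_pmf N (1/2)) {j. real N / 2 - (real m / 2 + L) < real j}"
        by (simp only: G_binom)
      also have "\<dots> \<le> 1/2 + (real m/2 + L + 1) / sqrt N"
        by (rule binom_anti[OF N1]) (use Lpos in auto)
      finally show ?thesis .
    qed
    also have "G e m N L \<le> (\<Sum>i<N. e (m+i)) / L"
      using G_markov[OF ue, of L m N] Lpos by (simp add: field_simps)
    also have "(real m/2 + L + 1) / sqrt N = (real m/2 + 1) / sqrt N + 1/8"
      unfolding L_def using sN by (simp add: field_simps)
    also have "(real m/2 + 1) / sqrt N \<le> 1/16"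
      using sN2 sN by (simp add: field_simps)
    also have "(\<Sum>i<N. e (m+i)) / L \<le> 1/16"
    proof -
      have "(\<Sum>i<N. e (m+i)) \<le> 2 * ((1/512) * (2 * sqrt N))"
        using eS S sn by linarith
      then have "(\<Sum>i<N. e (m+i)) \<le> L / 16" unfolding L_def by simp
      then show ?thesis using Lpos by (simp add: field_simps)
    qed
    finally show ?thesis unfolding N_def by simp
  qed
  then show ?thesis by blast
qed

lemma G_bounds':
  assumes "\<And>i. a \<le> i \<Longrightarrow> i < a + k \<Longrightarrow> 0 \<le> p i \<and> p i \<le> 1"
  shows "0 \<le> G p a k t \<and> G p a k t \<le> 1"
proof -
  define p' where "p' i = (if a \<le> i \<and> i < a + k then p i else 0)" for i
  have u: "unitseq p'" using assms unfolding unitseq_def p'_def by auto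
  have "G p a k t = G p' a k t" by (rule G_cong) (auto simp: p'_def)
  then show ?thesis using G_bounds[OF u] by simp
qed

lemma restrict_restrict_sub: "B \<subseteq> A \<Longrightarrow> restrict (restrict x A) B = restrict x B"
  by (auto simp: restrict_def fun_eq_iff)

locale CJ =
  fixes \<nu> :: "nat \<Rightarrow> real measure"
  assumes pu: "\<And>n. prob_on_unit (\<nu> n)"
begin

lemma nu_prob: "prob_space (\<nu> n)" using pu unfolding prob_on_unit_def by auto
lemma nu_space: "space (\<nu> n) = {0..1}" using pu unfolding prob_on_unit_def by auto
lemma nu_sets: "sets (\<nu> n) = sets (restrict_space borel {0..1::real})" using pu unfolding prob_on_unit_def by auto

sublocale P: product_prob_space \<nu> UNIV
  by (simp add: product_prob_space_def product_prob_space_axioms_def product_sigma_finite_def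
      nu_prob prob_space_imp_sigma_finite)

abbreviation "\<mu> \<equiv> PiM UNIV \<nu>"

lemma borel_to_nu:
  assumes "f \<in> borel_measurable borel"
  shows "f \<in> borel_measurable (\<nu> i)"
proof -
  have "f \<in> borel_measurable (restrict_space borel {0..1::real})"
    using assms by (rule measurable_restrict_space1)
  then show ?thesis unfolding measurable_cong_sets[OF nu_sets[of i] refl] .
qed

lemma comp_meas:
  assumes "i \<in> J"
  shows "(\<lambda>x. x i) \<in> borel_measurable (PiM J \<nu>)"
proof -
  have "(\<lambda>x. x) \<in> borel_measurable (\<nu> i)" by (rule borel_to_nu) simp
  then show ?thesis using measurable_compose[OF measurable_component_singleton[OF assms]] by blast
qed

lemma space_mem:
  assumes "x \<in> space (PiM J \<nu>)" "i \<in> J"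
  shows "0 \<le> x i \<and> x i \<le> 1"
  using assms by (auto simp: space_PiM nu_space)

lemma G_meas:
  assumes "{a..<a+k} \<subseteq> J"
  shows "(\<lambda>x. G x a k t) \<in> borel_measurable (PiM J \<nu>)"
  using assms
proof (induction k arbitrary: t)
  case 0 then show ?case by simp
next
  case (Suc k)
  have c: "(\<lambda>x. x (a+k)) \<in> borel_measurable (PiM J \<nu>)" using Suc.prems by (intro comp_meas) auto
  have sub: "{a..<a+k} \<subseteq> J" using Suc.prems by auto
  have i1: "(\<lambda>x. G x a k (t-1)) \<in> borel_measurable (PiM J \<nu>)" using Suc.IH[OF sub] by blast
  have i2: "(\<lambda>x. G x a k t) \<in> borel_measurable (PiM J \<nu>)" using Suc.IH[OF sub] by blast
  show ?case using c i1 i2 by simp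
qed

lemma G_space_bounds:
  assumes "x \<in> space (PiM J \<nu>)" "{a..<a+k} \<subseteq> J"
  shows "0 \<le> G x a k t \<and> G x a k t \<le> 1"
  by (rule G_bounds') (use assms space_mem in auto)

lemma L0:
  fixes g :: "(nat \<Rightarrow> real) \<Rightarrow> real"
  assumes "finite J" "g \<in> borel_measurable (PiM J \<nu>)"
  shows "(\<integral>x. g (restrict x J) \<partial>\<mu>) = (\<integral>y. g y \<partial>PiM J \<nu>)"
proof -
  have "(\<integral>y. g y \<partial>PiM J \<nu>) = (\<integral>y. g y \<partial>distr \<mu> (PiM J \<nu>) (\<lambda>x. restrict x J))"
    using P.distr_PiM_restrict_finite[of J] assms by simp
  also have "\<dots> = (\<integral>x. g (restrict x J) \<partial>\<mu>)"
    by (rule integral_distr[OF measurable_restrict_subset[of J UNIV \<nu>, OF subset_UNIV] assms(2)])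
  finally show ?thesis by simp
qed

lemma L1:
  fixes g :: "(nat \<Rightarrow> real) \<Rightarrow> real" and f :: "real \<Rightarrow> real"
  assumes g: "g \<in> borel_measurable (PiM {..<n} \<nu>)" "\<And>y. y \<in> space (PiM {..<n} \<nu>) \<Longrightarrow> \<bar>g y\<bar> \<le> Bg"
    and f: "f \<in> borel_measurable (\<nu> n)" "\<And>y. y \<in> space (\<nu> n) \<Longrightarrow> \<bar>f y\<bar> \<le> Bf"
  shows "(\<integral>x. g (restrict x {..<n}) * f (x n) \<partial>\<mu>) = (\<integral>x. g (restrict x {..<n}) \<partial>\<mu>) * (\<integral>y. f y \<partial>\<nu> n)"
proof -
  interpret F: finite_product_prob_space \<nu> "insert n {..<n}"
    by unfold_locales auto
  interpret F2: finite_product_prob_space \<nu> "{..<n}"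
    by unfold_locales auto
  define h where "h y = g (restrict y {..<n}) * f (y n)" for y
  obtain y0 where y0: "y0 \<in> space (PiM {..<n} \<nu>)" using F2.not_empty by blast
  have Bg0: "0 \<le> Bg" using g(2)[OF y0] by linarith
  have hm: "h \<in> borel_measurable (PiM (insert n {..<n}) \<nu>)"
  proof -
    have "(\<lambda>y. g (restrict y {..<n})) \<in> borel_measurable (PiM (insert n {..<n}) \<nu>)"
      using measurable_compose[OF measurable_restrict_subset[of "{..<n}" "insert n {..<n}" \<nu>] g(1)] by auto
    moreover have "(\<lambda>y. f (y n)) \<in> borel_measurable (PiM (insert n {..<n}) \<nu>)"
      using measurable_compose[OF measurable_component_singleton[of n "insert n {..<n}" \<nu>] f(1)] by auto
    ultimately show ?thesis unfolding h_def by simp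
  qed
  have hi: "integrable (PiM (insert n {..<n}) \<nu>) h"
  proof (rule F.integrable_const_bound[where B="Bg * Bf"])
    show "AE x in PiM (insert n {..<n}) \<nu>. norm (h x) \<le> Bg * Bf"
    proof (rule AE_I2)
      fix x assume x: "x \<in> space (PiM (insert n {..<n}) \<nu>)"
      have "restrict x {..<n} \<in> space (PiM {..<n} \<nu>)"
        using measurable_space[OF measurable_restrict_subset[of "{..<n}" "insert n {..<n}" \<nu>] x] by auto
      then have a: "\<bar>g (restrict x {..<n})\<bar> \<le> Bg" by (rule g(2))
      have "x n \<in> space (\<nu> n)" using x by (auto simp: space_PiM)
      then have b: "\<bar>f (x n)\<bar> \<le> Bf" by (rule f(2))
      show "norm (h x) \<le> Bg * Bf" unfolding h_def real_norm_def abs_mult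
        by (rule mult_mono[OF a b]) (use Bg0 in auto)
    qed
  qed (rule hm)
  have "(\<integral>x. g (restrict x {..<n}) * f (x n) \<partial>\<mu>) = (\<integral>x. h (restrict x (insert n {..<n})) \<partial>\<mu>)"
  proof -
    have "(\<lambda>x. g (restrict x {..<n}) * f (x n)) = (\<lambda>x. h (restrict x (insert n {..<n})))"
      unfolding h_def by (simp add: restrict_restrict_sub fun_eq_iff)
    then show ?thesis by simp
  qed
  also have "\<dots> = (\<integral>y. h y \<partial>PiM (insert n {..<n}) \<nu>)"
    by (rule L0) (use hm in auto)
  also have "\<dots> = (\<integral>x. (\<integral>y. h (x(n := y)) \<partial>\<nu> n) \<partial>PiM {..<n} \<nu>)"
    by (rule P.product_integral_insert[OF _ _ hi]) auto
  also have "\<dots> = (\<integral>x. g x * (\<integral>y. f y \<partial>\<nu> n) \<partial>PiM {..<n} \<nu>)"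
  proof (rule Bochner_Integration.integral_cong[OF refl])
    fix x assume x: "x \<in> space (PiM {..<n} \<nu>)"
    have "restrict (x(n := y)) {..<n} = x" for y
      using x by (auto simp: space_PiM PiE_def extensional_def restrict_def fun_eq_iff)
    then have "(\<integral>y. h (x(n := y)) \<partial>\<nu> n) = (\<integral>y. g x * f y \<partial>\<nu> n)"
      unfolding h_def by simp
    also have "\<dots> = g x * (\<integral>y. f y \<partial>\<nu> n)" by simp
    finally show "(\<integral>y. h (x(n := y)) \<partial>\<nu> n) = g x * (\<integral>y. f y \<partial>\<nu> n)" .
  qed
  also have "\<dots> = (\<integral>x. g x \<partial>PiM {..<n} \<nu>) * (\<integral>y. f y \<partial>\<nu> n)" by simp
  also have "(\<integral>x. g x \<partial>PiM {..<n} \<nu>) = (\<integral>x. g (restrict x {..<n}) \<partial>\<mu>)"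
    by (rule L0[symmetric]) (use g in auto)
  finally show ?thesis .
qed

end

context CJ begin

definition qm :: "nat \<Rightarrow> real" where "qm i = (\<integral>x. x \<partial>\<nu> i)"

lemma id_int: "integrable (\<nu> i) (\<lambda>x. x)"
proof (rule P.M.integrable_const_bound[where B=1])
  show "AE x in \<nu> i. norm x \<le> 1" by (rule AE_I2) (auto simp: nu_space)
  show "(\<lambda>x. x) \<in> borel_measurable (\<nu> i)" by (rule borel_to_nu) simp
qed

lemma q_unit: "unitseq qm"
  unfolding unitseq_def
proof
  fix i
  have "0 \<le> (\<integral>x. x \<partial>\<nu> i)" by (rule integral_nonneg_AE) (rule AE_I2, auto simp: nu_space)
  moreover have "(\<integral>x. x \<partial>\<nu> i) \<le> (\<integral>x. 1 \<partial>\<nu> i)"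
    by (rule integral_mono_AE[OF id_int]) (auto intro!: AE_I2 simp: nu_space)
  moreover have "(\<integral>x. 1 \<partial>\<nu> i) = (1::real)" by (simp add: lebesgue_integral_const P.M.prob_space)
  ultimately show "0 \<le> qm i \<and> qm i \<le> 1" unfolding qm_def by simp
qed

lemma space_unitseq: "x \<in> space \<mu> \<Longrightarrow> unitseq x"
  unfolding unitseq_def using space_mem[of x UNIV] by auto

lemma bounded_int:
  fixes f :: "(nat \<Rightarrow> real) \<Rightarrow> real"
  assumes "f \<in> borel_measurable \<mu>" "\<And>x. x \<in> space \<mu> \<Longrightarrow> \<bar>f x\<bar> \<le> B"
  shows "integrable \<mu> f"
  by (rule P.P.integrable_const_bound[where B=B]) (use assms in \<open>auto intro!: AE_I2\<close>)

lemma hC_meas: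
  assumes "C' \<in> sets (PiM {..<m} \<nu>)" "m \<le> n"
  shows "(\<lambda>y. indicator C' (restrict y {..<m}) :: real) \<in> borel_measurable (PiM {..<n} \<nu>)"
  using measurable_compose[OF measurable_restrict_subset[of "{..<m}" "{..<n}" \<nu>] borel_measurable_indicator[OF assms(1)]]
    assms by auto

lemma hC_meas_mu:
  assumes "C' \<in> sets (PiM {..<m} \<nu>)"
  shows "(\<lambda>y. indicator C' (restrict y {..<m}) :: real) \<in> borel_measurable \<mu>"
  using measurable_compose[OF measurable_restrict_subset[of "{..<m}" UNIV \<nu>] borel_measurable_indicator[OF assms(1)]]
  by auto

lemma INT:
  assumes C': "C' \<in> sets (PiM {..<m} \<nu>)"
  shows "(\<integral>x. indicator C' (restrict x {..<m}) * G x m k t \<partial>\<mu>)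
       = (\<integral>x. indicator C' (restrict x {..<m}) \<partial>\<mu>) * G qm m k t"
proof (induction k arbitrary: t)
  case 0
  then show ?case by simp
next
  case (Suc k)
  let ?h = "\<lambda>x. indicator C' (restrict x {..<m}) :: real"
  define g where "g s y = ?h y * G y m k s" for s y
  have gm: "g s \<in> borel_measurable (PiM {..<m+k} \<nu>)" for s
  proof -
    have a: "(\<lambda>x. G x m k s) \<in> borel_measurable (PiM {..<m+k} \<nu>)" by (rule G_meas) auto
    have b: "?h \<in> borel_measurable (PiM {..<m+k} \<nu>)" by (rule hC_meas[OF C']) simp
    show ?thesis unfolding g_def using borel_measurable_times[OF b a] by simp
  qed
  have gb: "\<bar>g s y\<bar> \<le> 1" if "y \<in> space (PiM {..<m+k} \<nu>)" for s y
  proof -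
    have "0 \<le> G y m k s \<and> G y m k s \<le> 1" by (rule G_space_bounds[OF that]) auto
    then show ?thesis unfolding g_def by (auto simp: indicator_def)
  qed
  have gr: "g s (restrict x {..<m+k}) = ?h x * G x m k s" for s x
  proof -
    have "G (restrict x {..<m+k}) m k s = G x m k s" by (rule G_cong) auto
    moreover have "restrict (restrict x {..<m+k}) {..<m} = restrict x {..<m}"
      by (rule restrict_restrict_sub) auto
    ultimately show ?thesis unfolding g_def by simp
  qed
  have gmu: "(\<lambda>x. g s (restrict x {..<m+k})) \<in> borel_measurable \<mu>" for s
    using measurable_compose[OF measurable_restrict_subset[of "{..<m+k}" UNIV \<nu>] gm[of s]] by auto
  have cm: "(\<lambda>x. x (m+k)) \<in> borel_measurable \<mu>" by (rule comp_meas) simp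
  have sp: "x \<in> space \<mu> \<Longrightarrow> restrict x {..<m+k} \<in> space (PiM {..<m+k} \<nu>)" for x
    using measurable_space[OF measurable_restrict_subset[of "{..<m+k}" UNIV \<nu>]] by auto
  have xb: "x \<in> space \<mu> \<Longrightarrow> 0 \<le> x (m+k) \<and> x (m+k) \<le> 1" for x using space_mem[of x UNIV] by auto
  have i1: "integrable \<mu> (\<lambda>x. g (t-1) (restrict x {..<m+k}) * x (m+k))"
  proof (rule bounded_int[where B=1])
    fix x assume x: "x \<in> space \<mu>"
    have "\<bar>g (t-1) (restrict x {..<m+k})\<bar> * \<bar>x (m+k)\<bar> \<le> 1 * 1"
      using gb[OF sp[OF x]] xb[OF x] by (intro mult_mono) auto
    then show "\<bar>g (t-1) (restrict x {..<m+k}) * x (m+k)\<bar> \<le> 1" by (simp add: abs_mult)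
  qed (use gmu cm in simp)
  have i2: "integrable \<mu> (\<lambda>x. g t (restrict x {..<m+k}) * (1 - x (m+k)))"
  proof (rule bounded_int[where B=1])
    fix x assume x: "x \<in> space \<mu>"
    have "\<bar>g t (restrict x {..<m+k})\<bar> * \<bar>1 - x (m+k)\<bar> \<le> 1 * 1"
      using gb[OF sp[OF x]] xb[OF x] by (intro mult_mono) auto
    then show "\<bar>g t (restrict x {..<m+k}) * (1 - x (m+k))\<bar> \<le> 1" by (simp add: abs_mult)
  qed (use gmu cm in simp)
  have idm: "(\<lambda>y. y) \<in> borel_measurable (\<nu> (m+k))" by (rule borel_to_nu) simp
  have idm2: "(\<lambda>y. 1 - y) \<in> borel_measurable (\<nu> (m+k))" by (rule borel_to_nu) simp
  have L1a: "(\<integral>x. g s (restrict x {..<m+k}) * x (m+k) \<partial>\<mu>) = (\<integral>x. g s (restrict x {..<m+k}) \<partial>\<mu>) * qm (m+k)" for s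
    unfolding qm_def
    by (rule L1[OF gm gb idm, where Bf=1]) (auto simp: nu_space)
  have L1b: "(\<integral>x. g s (restrict x {..<m+k}) * (1 - x (m+k)) \<partial>\<mu>) = (\<integral>x. g s (restrict x {..<m+k}) \<partial>\<mu>) * (1 - qm (m+k))" for s
  proof -
    have "(\<integral>x. g s (restrict x {..<m+k}) * (1 - x (m+k)) \<partial>\<mu>) = (\<integral>x. g s (restrict x {..<m+k}) \<partial>\<mu>) * (\<integral>y. 1 - y \<partial>\<nu> (m+k))"
      by (rule L1[OF gm gb idm2, where Bf=1]) (auto simp: nu_space)
    also have "(\<integral>y. 1 - y \<partial>\<nu> (m+k)) = (\<integral>y. 1 \<partial>\<nu> (m+k)) - (\<integral>y. y \<partial>\<nu> (m+k))"
      by (rule Bochner_Integration.integral_diff[OF P.M.integrable_const id_int])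
    also have "\<dots> = 1 - qm (m+k)"
      unfolding qm_def by (simp add: lebesgue_integral_const P.M.prob_space)
    finally show ?thesis .
  qed
  have gi: "(\<integral>x. g s (restrict x {..<m+k}) \<partial>\<mu>) = (\<integral>x. ?h x \<partial>\<mu>) * G qm m k s" for s
    unfolding gr using Suc.IH .
  have "(\<integral>x. ?h x * G x m (Suc k) t \<partial>\<mu>)
      = (\<integral>x. g (t-1) (restrict x {..<m+k}) * x (m+k) + g t (restrict x {..<m+k}) * (1 - x (m+k)) \<partial>\<mu>)"
    unfolding gr by (rule Bochner_Integration.integral_cong[OF refl]) (simp add: algebra_simps)
  also have "\<dots> = (\<integral>x. g (t-1) (restrict x {..<m+k}) * x (m+k) \<partial>\<mu>) + (\<integral>x. g t (restrict x {..<m+k}) * (1 - x (m+k)) \<partial>\<mu>)"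
    by (rule Bochner_Integration.integral_add[OF i1 i2])
  also have "\<dots> = (\<integral>x. ?h x \<partial>\<mu>) * G qm m (Suc k) t"
    unfolding L1a L1b gi by (simp add: algebra_simps)
  finally show ?case .
qed

lemma maj_meas: "(\<lambda>x. maj_prob x n) \<in> borel_measurable \<mu>"
proof -
  have "(\<lambda>x. G x 0 n (real n / 2)) \<in> borel_measurable \<mu>" by (rule G_meas) simp
  moreover have "\<And>x. x \<in> space \<mu> \<Longrightarrow> maj_prob x n = G x 0 n (real n / 2)"
    using maj_prob_G space_unitseq by blast
  ultimately show ?thesis using measurable_cong[of \<mu> "\<lambda>x. maj_prob x n"] by metis
qed

lemma maj_bounds: "x \<in> space \<mu> \<Longrightarrow> 0 \<le> maj_prob x n \<and> maj_prob x n \<le> 1"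
  using maj_prob_G[OF space_unitseq] G_bounds[OF space_unitseq] by metis

lemma CB:
  assumes C': "C' \<in> sets (PiM {..<m} \<nu>)" and mn: "m \<le> n"
  shows "(\<integral>x. indicator C' (restrict x {..<m}) * maj_prob x n \<partial>\<mu>)
       \<le> (\<integral>x. indicator C' (restrict x {..<m}) \<partial>\<mu>) * G qm m (n - m) (real n / 2 - real m)"
proof -
  let ?h = "\<lambda>x. indicator C' (restrict x {..<m}) :: real"
  have "(\<integral>x. ?h x * maj_prob x n \<partial>\<mu>) \<le> (\<integral>x. ?h x * G x m (n - m) (real n / 2 - real m) \<partial>\<mu>)"
  proof (rule integral_mono)
    show "integrable \<mu> (\<lambda>x. ?h x * maj_prob x n)"
      by (rule bounded_int[where B=1]) (use hC_meas_mu[OF C'] maj_meas maj_bounds in \<open>auto simp: indicator_def\<close>)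
    show "integrable \<mu> (\<lambda>x. ?h x * G x m (n - m) (real n / 2 - real m))"
      by (rule bounded_int[where B=1])
         (use hC_meas_mu[OF C'] G_meas[of m "n-m" UNIV] G_bounds[OF space_unitseq] in \<open>auto simp: indicator_def\<close>)
    fix x assume x: "x \<in> space \<mu>"
    have "maj_prob x n = G x 0 (m + (n - m)) (real n / 2)"
      using maj_prob_G[OF space_unitseq[OF x]] mn by simp
    also have "\<dots> \<le> G x m (n - m) (real n / 2 - real m)" by (rule G_shift[OF space_unitseq[OF x]])
    finally show "?h x * maj_prob x n \<le> ?h x * G x m (n - m) (real n / 2 - real m)"
      by (intro mult_left_mono) auto
  qed
  also have "\<dots> = (\<integral>x. ?h x \<partial>\<mu>) * G qm m (n - m) (real n / 2 - real m)"
    by (rule INT[OF C'])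
  finally show ?thesis .
qed

end

lemma sum_meas_props:
  fixes \<nu> \<nu>' :: "real measure"
  assumes fin: "finite_measure \<nu>" "finite_measure \<nu>'" and ss: "sets \<nu>' = sets \<nu>"
  shows "sets (sum_meas \<nu> \<nu>') = sets \<nu>" "space (sum_meas \<nu> \<nu>') = space \<nu>"
    "\<And>A. A \<in> sets \<nu> \<Longrightarrow> emeasure (sum_meas \<nu> \<nu>') A = emeasure \<nu> A + emeasure \<nu>' A"
proof -
  have sa: "sigma_algebra (space \<nu>) (sets \<nu>)" by (rule sets.sigma_algebra_axioms)
  show "sets (sum_meas \<nu> \<nu>') = sets \<nu>" unfolding sum_meas_def using sigma_algebra.sets_measure_of_eq[OF sa] .
  show "space (sum_meas \<nu> \<nu>') = space \<nu>" unfolding sum_meas_def using sigma_algebra.space_measure_of_eq[OF sa] .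
  fix A assume A: "A \<in> sets \<nu>"
  show "emeasure (sum_meas \<nu> \<nu>') A = emeasure \<nu> A + emeasure \<nu>' A"
    unfolding sum_meas_def
  proof (rule emeasure_measure_of_sigma[OF sa _ _ A])
    show "positive (sets \<nu>) (\<lambda>A. emeasure \<nu> A + emeasure \<nu>' A)" unfolding positive_def by simp
    show "countably_additive (sets \<nu>) (\<lambda>A. emeasure \<nu> A + emeasure \<nu>' A)"
      unfolding countably_additive_def
    proof (intro allI impI)
      fix F :: "nat \<Rightarrow> real set" assume F: "range F \<subseteq> sets \<nu>" "disjoint_family F" "\<Union> (range F) \<in> sets \<nu>"
      have F': "range F \<subseteq> sets \<nu>'" using F ss by simp
      have "(\<Sum>i. emeasure \<nu> (F i) + emeasure \<nu>' (F i)) = (\<Sum>i. emeasure \<nu> (F i)) + (\<Sum>i. emeasure \<nu>' (F i))"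
        by (rule suminf_add[symmetric]) auto
      also have "\<dots> = emeasure \<nu> (\<Union>i. F i) + emeasure \<nu>' (\<Union>i. F i)"
        using suminf_emeasure[OF F(1,2)] suminf_emeasure[OF F' F(2)] by simp
      finally show "(\<Sum>i. emeasure \<nu> (F i) + emeasure \<nu>' (F i)) = emeasure \<nu> (\<Union> (range F)) + emeasure \<nu>' (\<Union> (range F))" .
    qed
  qed
qed

lemma amgm_lam:
  fixes a b l :: real
  assumes "l > 0"
  shows "a * b \<le> (l * a^2 + b^2 / l) / 2"
proof -
  have "0 \<le> (l * a - b)^2 / l" using assms by simp
  also have "(l * a - b)^2 / l = l * a^2 - 2 * a * b + b^2 / l"
    using assms by (simp add: power2_eq_square field_simps)
  finally show ?thesis by simp
qed

lemma pointwise_hell: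
  fixes x f g l :: real
  assumes x: "0 \<le> x" "x \<le> 1" and fg: "0 \<le> f" "0 \<le> g" and l: "l > 0"
  shows "\<bar>(x - 1/2) * (f - g)\<bar> \<le> (l * (f + g - 2 * sqrt (f * g)) + (f + g + 2 * sqrt (f * g)) / l) / 4"
proof -
  let ?a = "sqrt f" and ?b = "sqrt g"
  have sf: "?a^2 = f" "?b^2 = g" using fg by auto
  have sfg: "sqrt (f * g) = ?a * ?b" by (simp add: real_sqrt_mult)
  have d: "\<bar>f - g\<bar> = \<bar>?a - ?b\<bar> * (?a + ?b)"
  proof -
    have "f - g = (?a - ?b) * (?a + ?b)" using sf by (simp add: power2_eq_square algebra_simps)
    moreover have "\<bar>?a + ?b\<bar> = ?a + ?b" using fg by simp
    ultimately show ?thesis by (simp only: abs_mult)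
  qed
  have "\<bar>?a - ?b\<bar> * (?a + ?b) \<le> (l * \<bar>?a - ?b\<bar>^2 + (?a + ?b)^2 / l) / 2"
    by (rule amgm_lam[OF l])
  also have "\<bar>?a - ?b\<bar>^2 = f + g - 2 * sqrt (f * g)"
    using sf sfg by (simp add: power2_eq_square algebra_simps)
  also have "(?a + ?b)^2 = f + g + 2 * sqrt (f * g)"
    using sf sfg by (simp add: power2_eq_square algebra_simps)
  finally have h: "\<bar>f - g\<bar> \<le> (l * (f + g - 2 * sqrt (f * g)) + (f + g + 2 * sqrt (f * g)) / l) / 2"
    using d by simp
  have "\<bar>(x - 1/2) * (f - g)\<bar> = \<bar>x - 1/2\<bar> * \<bar>f - g\<bar>" by (simp add: abs_mult)
  also have "\<dots> \<le> (1/2) * \<bar>f - g\<bar>"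
  proof (intro mult_right_mono)
    show "\<bar>x - 1/2\<bar> \<le> 1/2" using x by (simp add: abs_if)
  qed simp
  also have "\<dots> \<le> (1/2) * ((l * (f + g - 2 * sqrt (f * g)) + (f + g + 2 * sqrt (f * g)) / l) / 2)"
    using h by simp
  finally show ?thesis by simp
qed

lemma opt_lam:
  fixes d a :: real
  assumes a: "0 \<le> a" and b: "\<And>l. l > 0 \<Longrightarrow> \<bar>d\<bar> \<le> l * a + 1 / l"
  shows "d^2 \<le> 4 * a"
proof (cases "a = 0")
  case True
  have "\<bar>d\<bar> \<le> 0"
  proof (rule field_le_epsilon)
    fix e :: real assume e: "0 < e"
    have "\<bar>d\<bar> \<le> (1/e) * a + 1 / (1/e)" using b[of "1/e"] e by simp
    then show "\<bar>d\<bar> \<le> 0 + e" using True by simp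
  qed
  then show ?thesis using True by simp
next
  case False
  then have ap: "a > 0" using a by simp
  have "\<bar>d\<bar> \<le> (1 / sqrt a) * a + 1 / (1 / sqrt a)" using b[of "1 / sqrt a"] ap by simp
  also have "\<dots> = 2 * sqrt a" using ap by (simp add: field_simps real_sqrt_mult[symmetric])
  finally have "\<bar>d\<bar> \<le> 2 * sqrt a" .
  then have "\<bar>d\<bar>^2 \<le> (2 * sqrt a)^2" by (intro power_mono) auto
  then show ?thesis using ap by (simp add: power_mult_distrib)
qed

lemma lin3:
  fixes u1 u2 u3 :: "'a \<Rightarrow> real"
  assumes "integrable M u1" "integrable M u2" "integrable M u3"
  shows "(\<integral>x. c1 * u1 x + c2 * u2 x + c3 * u3 x \<partial>M) = c1 * (\<integral>x. u1 x \<partial>M) + c2 * (\<integral>x. u2 x \<partial>M) + c3 * (\<integral>x. u3 x \<partial>M)"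
  using assms by simp

lemma lin4:
  fixes u1 u2 u3 u4 :: "'a \<Rightarrow> real"
  assumes "integrable M u1" "integrable M u2" "integrable M u3" "integrable M u4"
  shows "(\<integral>x. c1 * u1 x + c2 * u2 x + c3 * u3 x + c4 * u4 x \<partial>M)
    = c1 * (\<integral>x. u1 x \<partial>M) + c2 * (\<integral>x. u2 x \<partial>M) + c3 * (\<integral>x. u3 x \<partial>M) + c4 * (\<integral>x. u4 x \<partial>M)"
  using assms by simp

lemma hell_bound:
  assumes pu: "prob_on_unit \<nu>" "prob_on_unit \<nu>'"
  shows "((\<integral>x. x \<partial>\<nu>) - (\<integral>x. x \<partial>\<nu>'))^2 \<le> 2 * (1 - hellinger \<nu> \<nu>')"
proof -
  interpret N1: prob_space \<nu> using pu unfolding prob_on_unit_def by auto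
  interpret N2: prob_space \<nu>' using pu unfolding prob_on_unit_def by auto
  have sp1: "space \<nu> = {0..1}" and sp2: "space \<nu>' = {0..1}" using pu unfolding prob_on_unit_def by auto
  have ss: "sets \<nu>' = sets \<nu>" using pu unfolding prob_on_unit_def by auto
  define \<tau> where "\<tau> = sum_meas \<nu> \<nu>'"
  have st: "sets \<tau> = sets \<nu>" and spt: "space \<tau> = space \<nu>"
    and et: "\<And>A. A \<in> sets \<nu> \<Longrightarrow> emeasure \<tau> A = emeasure \<nu> A + emeasure \<nu>' A"
    using sum_meas_props[OF N1.finite_measure_axioms N2.finite_measure_axioms ss] unfolding \<tau>_def by auto
  have "emeasure \<tau> (space \<tau>) = emeasure \<nu> (space \<nu>) + emeasure \<nu>' (space \<nu>)"
    using et[of "space \<nu>"] spt by simp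
  also have "\<dots> = 2" using sp1 sp2 N1.emeasure_space_1 N2.emeasure_space_1 by simp
  finally have "emeasure \<tau> (space \<tau>) \<noteq> \<infinity>" by simp
  then interpret T: finite_measure \<tau> by (rule finite_measureI)
  have ac1: "absolutely_continuous \<tau> \<nu>"
    unfolding absolutely_continuous_def
  proof
    fix A assume "A \<in> null_sets \<tau>"
    then have A: "A \<in> sets \<nu>" "emeasure \<tau> A = 0" using st by auto
    then have "emeasure \<nu> A = 0" using et[OF A(1)] by simp
    then show "A \<in> null_sets \<nu>" using A by auto
  qed
  have ac2: "absolutely_continuous \<tau> \<nu>'"
    unfolding absolutely_continuous_def
  proof
    fix A assume "A \<in> null_sets \<tau>"
    then have A: "A \<in> sets \<nu>" "emeasure \<tau> A = 0" using st by auto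
    then have "emeasure \<nu>' A = 0" using et[OF A(1)] by simp
    then show "A \<in> null_sets \<nu>'" using A ss by auto
  qed
  have sf1: "sigma_finite_measure \<nu>" by unfold_locales
  have sf2: "sigma_finite_measure \<nu>'" by unfold_locales
  have st1: "sets \<nu> = sets \<tau>" using st by simp
  have st2: "sets \<nu>' = sets \<tau>" using st ss by simp
  define f where "f x = enn2real (RN_deriv \<tau> \<nu> x)" for x
  define g where "g x = enn2real (RN_deriv \<tau> \<nu>' x)" for x
  have fdef: "f = (\<lambda>x. enn2real (RN_deriv \<tau> \<nu> x))" by (simp add: f_def fun_eq_iff)
  have gdef: "g = (\<lambda>x. enn2real (RN_deriv \<tau> \<nu>' x))" by (simp add: g_def fun_eq_iff)
  have fm: "f \<in> borel_measurable \<tau>" unfolding f_def by simp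
  have gm: "g \<in> borel_measurable \<tau>" unfolding g_def by simp
  have f0: "0 \<le> f x" "0 \<le> g x" for x unfolding f_def g_def by auto
  have onem: "(\<lambda>x. 1::real) \<in> borel_measurable \<tau>" by auto
  have stb: "sets \<tau> = sets (restrict_space borel {0..1::real})" using st pu unfolding prob_on_unit_def by auto
  have idm: "(\<lambda>x. x) \<in> borel_measurable \<tau>"
    unfolding measurable_cong_sets[OF stb refl] by (rule measurable_restrict_space1) simp
  have sb1: "sets \<nu> = sets (restrict_space borel {0..1::real})" using pu unfolding prob_on_unit_def by auto
  have sb2: "sets \<nu>' = sets (restrict_space borel {0..1::real})" using pu unfolding prob_on_unit_def by auto
  have idm1: "(\<lambda>x. x) \<in> borel_measurable \<nu>"
    unfolding measurable_cong_sets[OF sb1 refl] by (rule measurable_restrict_space1) simp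
  have idm2: "(\<lambda>x. x) \<in> borel_measurable \<nu>'"
    unfolding measurable_cong_sets[OF sb2 refl] by (rule measurable_restrict_space1) simp
  have id1: "integrable \<nu> (\<lambda>x. x)"
    by (rule N1.integrable_const_bound[where B=1]) (auto intro!: AE_I2 simp: sp1 idm1)
  have id2: "integrable \<nu>' (\<lambda>x. x)"
    by (rule N2.integrable_const_bound[where B=1]) (auto intro!: AE_I2 simp: sp2 idm2)
  have fi: "integrable \<tau> f"
    using T.RN_deriv_integrable[OF sf1 ac1 st1 onem] by (simp add: fdef)
  have gi: "integrable \<tau> g"
    using T.RN_deriv_integrable[OF sf2 ac2 st2 onem] by (simp add: gdef)
  have fxi: "integrable \<tau> (\<lambda>x. f x * x)"
    using T.RN_deriv_integrable[OF sf1 ac1 st1 idm] id1 by (simp add: fdef)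
  have gxi: "integrable \<tau> (\<lambda>x. g x * x)"
    using T.RN_deriv_integrable[OF sf2 ac2 st2 idm] id2 by (simp add: gdef)
  have fint: "(\<integral>x. f x \<partial>\<tau>) = 1"
    using T.RN_deriv_integral[OF sf1 ac1 st1 onem] by (simp add: fdef N1.prob_space)
  have gint: "(\<integral>x. g x \<partial>\<tau>) = 1"
    using T.RN_deriv_integral[OF sf2 ac2 st2 onem] by (simp add: gdef N2.prob_space)
  have fxint: "(\<integral>x. f x * x \<partial>\<tau>) = (\<integral>x. x \<partial>\<nu>)"
    using T.RN_deriv_integral[OF sf1 ac1 st1 idm] by (simp add: fdef)
  have gxint: "(\<integral>x. g x * x \<partial>\<tau>) = (\<integral>x. x \<partial>\<nu>')"
    using T.RN_deriv_integral[OF sf2 ac2 st2 idm] by (simp add: gdef)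
  define s where "s x = sqrt (f x * g x)" for x
  have sm: "s \<in> borel_measurable \<tau>" unfolding s_def using fm gm by simp
  have sle: "s x \<le> f x + g x" for x
  proof -
    have "f x * g x \<le> (f x + g x)^2" using f0[of x] by (simp add: power2_eq_square algebra_simps)
    then have "sqrt (f x * g x) \<le> sqrt ((f x + g x)^2)" by (rule real_sqrt_le_mono)
    then show ?thesis unfolding s_def using f0[of x] by simp
  qed
  have s0: "0 \<le> s x" for x unfolding s_def using f0[of x] by (simp add: mult_nonneg_nonneg)
  have si: "integrable \<tau> s"
  proof (rule Bochner_Integration.integrable_bound[OF Bochner_Integration.integrable_add[OF fi gi] sm])
    show "AE x in \<tau>. norm (s x) \<le> norm (f x + g x)" using sle s0 f0 by (auto intro!: AE_I2)
  qed
  have H: "hellinger \<nu> \<nu>' = (\<integral>x. s x \<partial>\<tau>)" unfolding hellinger_def Let_def \<tau>_def s_def f_def g_def ..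
  have amg: "2 * s x \<le> f x + g x" for x
  proof -
    have "sqrt (f x) * sqrt (g x) \<le> (sqrt (f x)^2 + sqrt (g x)^2) / 2" using amgm_lam[of 1 "sqrt (f x)" "sqrt (g x)"] by simp
    then show ?thesis unfolding s_def using f0[of x] by (simp add: real_sqrt_mult)
  qed
  have H1: "hellinger \<nu> \<nu>' \<le> 1"
  proof -
    have "0 \<le> (\<integral>x. 1 * f x + 1 * g x + (-2) * s x \<partial>\<tau>)"
    proof (rule integral_nonneg_AE, rule AE_I2)
      fix x show "0 \<le> 1 * f x + 1 * g x + (-2) * s x" using amg[of x] by simp
    qed
    also have "\<dots> = 2 - 2 * hellinger \<nu> \<nu>'" unfolding lin3[OF fi gi si] fint gint H by simp
    finally show ?thesis by simp
  qed
  define a where "a = (1 - hellinger \<nu> \<nu>') / 2"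
  have a0: "0 \<le> a" unfolding a_def using H1 by simp
  define d where "d = (\<integral>x. x \<partial>\<nu>) - (\<integral>x. x \<partial>\<nu>')"
  have dint: "d = (\<integral>x. (x - 1/2) * (f x - g x) \<partial>\<tau>)"
  proof -
    have "(\<integral>x. (x - 1/2) * (f x - g x) \<partial>\<tau>) = (\<integral>x. 1 * (f x * x) + (-1) * (g x * x) + (-1/2) * f x + (1/2) * g x \<partial>\<tau>)"
      by (rule Bochner_Integration.integral_cong[OF refl]) (simp add: field_simps)
    also have "\<dots> = d" unfolding lin4[OF fxi gxi fi gi] fxint gxint fint gint d_def by simp
    finally show ?thesis by simp
  qed
  have bound: "\<bar>d\<bar> \<le> l * a + 1 / l" if l: "l > 0" for l
  proof -
    define B where "B x = (l/4 + 1/(4*l)) * f x + (l/4 + 1/(4*l)) * g x + (- l/2 + 1/(2*l)) * s x" for x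
    have Bi: "integrable \<tau> B" unfolding B_def using fi gi si by simp
    have hi: "integrable \<tau> (\<lambda>x. (x - 1/2) * (f x - g x))"
    proof -
      have "integrable \<tau> (\<lambda>x. 1 * (f x * x) + (-1) * (g x * x) + (-1/2) * f x + (1/2) * g x)"
        using fxi gxi fi gi by simp
      moreover have "(\<lambda>x. 1 * (f x * x) + (-1) * (g x * x) + (-1/2) * f x + (1/2) * g x) = (\<lambda>x. (x - 1/2) * (f x - g x))"
        by (simp add: fun_eq_iff field_simps)
      ultimately show ?thesis by simp
    qed
    have "\<bar>d\<bar> \<le> (\<integral>x. \<bar>(x - 1/2) * (f x - g x)\<bar> \<partial>\<tau>)"
      unfolding dint using integral_norm_bound[of \<tau> "\<lambda>x. (x - 1/2) * (f x - g x)"] by simp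
    also have "\<dots> \<le> (\<integral>x. B x \<partial>\<tau>)"
    proof (rule integral_mono)
      show "integrable \<tau> (\<lambda>x. \<bar>(x - 1/2) * (f x - g x)\<bar>)" using hi by simp
      show "integrable \<tau> B" by (rule Bi)
      fix x assume "x \<in> space \<tau>"
      then have x: "0 \<le> x" "x \<le> 1" using spt sp1 by auto
      have "\<bar>(x - 1/2) * (f x - g x)\<bar> \<le> (l * (f x + g x - 2 * sqrt (f x * g x)) + (f x + g x + 2 * sqrt (f x * g x)) / l) / 4"
        by (rule pointwise_hell[OF x f0 l])
      also have "\<dots> = B x" unfolding B_def s_def using l by (simp add: field_simps)
      finally show "\<bar>(x - 1/2) * (f x - g x)\<bar> \<le> B x" .
    qed
    also have "(\<integral>x. B x \<partial>\<tau>) = l * a + (1 + hellinger \<nu> \<nu>') / (2 * l)"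
      unfolding B_def lin3[OF fi gi si] fint gint H[symmetric] a_def using l by (simp add: field_simps)
    also have "\<dots> \<le> l * a + 1 / l"
      using H1 l by (simp add: field_simps)
    finally show ?thesis .
  qed
  have "d^2 \<le> 4 * a" by (rule opt_lam[OF a0 bound])
  then show ?thesis unfolding d_def a_def by simp
qed

lemma small_from_summable:
  fixes \<delta> :: "nat \<Rightarrow> real"
  assumes sm: "summable (\<lambda>i. (\<delta> i)^2)" and e: "\<epsilon> > 0"
  shows "\<exists>n0. \<forall>n\<ge>n0. (\<Sum>i<n. \<bar>\<delta> i\<bar>) \<le> \<epsilon> * sqrt n"
proof -
  obtain M where M: "norm (\<Sum>i. (\<delta> (i + M))^2) < \<epsilon>^2 / 16"
    using suminf_exist_split[OF _ sm, of "\<epsilon>^2/16"] e by auto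
  have smM: "summable (\<lambda>i. (\<delta> (i + M))^2)" using sm by (subst summable_iff_shift) 
  define A where "A = (\<Sum>i<M. \<bar>\<delta> i\<bar>)"
  have A0: "0 \<le> A" unfolding A_def by (simp add: sum_nonneg)
  define n0 where "n0 = M + nat \<lceil>(2 * A / \<epsilon>)^2\<rceil>"
  have "(\<Sum>i<n. \<bar>\<delta> i\<bar>) \<le> \<epsilon> * sqrt n" if n: "n \<ge> n0" for n
  proof -
    define k where "k = n - M"
    have nk: "n = M + k" using n unfolding k_def n0_def by simp
    have split: "(\<Sum>i<n. \<bar>\<delta> i\<bar>) = A + (\<Sum>i<k. \<bar>\<delta> (i + M)\<bar>)"
    proof -
      have "(\<Sum>i<n. \<bar>\<delta> i\<bar>) = (\<Sum>i\<in>{0..<M}. \<bar>\<delta> i\<bar>) + (\<Sum>i\<in>{M..<n}. \<bar>\<delta> i\<bar>)"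
        using sum.atLeastLessThan_concat[of 0 M n "\<lambda>i. \<bar>\<delta> i\<bar>"] nk by (simp add: lessThan_atLeast0)
      also have "(\<Sum>i\<in>{M..<n}. \<bar>\<delta> i\<bar>) = (\<Sum>i\<in>{0..<k}. \<bar>\<delta> (i + M)\<bar>)"
        using sum.shift_bounds_nat_ivl[of "\<lambda>i. \<bar>\<delta> i\<bar>" 0 M k] nk by (simp add: add.commute)
      finally show ?thesis unfolding A_def by (simp add: lessThan_atLeast0)
    qed
    have T: "(\<Sum>i<k. \<bar>\<delta> (i + M)\<bar>) \<le> \<epsilon> / 4 * sqrt n"
    proof -
      have cs: "(\<Sum>i<k. \<bar>\<delta> (i + M)\<bar> * 1)^2 \<le> (\<Sum>i<k. \<bar>\<delta> (i + M)\<bar>^2) * (\<Sum>i<k. 1^2)"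
        by (rule Cauchy_Schwarz_ineq_sum)
      have s1: "(\<Sum>i<k. \<bar>\<delta> (i + M)\<bar>^2) \<le> (\<Sum>i. (\<delta> (i + M))^2)"
        using sum_le_suminf[OF smM, of "{..<k}"] by simp
      have s2: "(\<Sum>i. (\<delta> (i + M))^2) \<le> \<epsilon>^2 / 16" using M by simp
      have s3: "(\<Sum>i<k. (1::real)^2) \<le> n" using nk by simp
      have "(\<Sum>i<k. \<bar>\<delta> (i + M)\<bar>)^2 \<le> (\<epsilon>^2 / 16) * real n"
      proof -
        have "(\<Sum>i<k. \<bar>\<delta> (i + M)\<bar>^2) * (\<Sum>i<k. (1::real)^2) \<le> (\<epsilon>^2 / 16) * real n"
          by (rule mult_mono) (use s1 s2 s3 in \<open>auto intro: sum_nonneg\<close>)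
        then show ?thesis using cs by simp
      qed
      also have "\<dots> = (\<epsilon>/4 * sqrt n)^2" by (simp add: power_mult_distrib power_divide)
      finally have "(\<Sum>i<k. \<bar>\<delta> (i + M)\<bar>)^2 \<le> (\<epsilon>/4 * sqrt n)^2" .
      then show ?thesis
        by (rule power2_le_imp_le) (use e in simp)
    qed
    have "A \<le> \<epsilon> / 2 * sqrt n"
    proof -
      have "(2 * A / \<epsilon>)^2 \<le> real n"
      proof -
        have "(2 * A / \<epsilon>)^2 \<le> real (nat \<lceil>(2 * A / \<epsilon>)^2\<rceil>)" by linarith
        also have "\<dots> \<le> real n" using n unfolding n0_def by simp
        finally show ?thesis .
      qed
      then have "sqrt ((2 * A / \<epsilon>)^2) \<le> sqrt n" by (rule real_sqrt_le_mono)
      then have "2 * A / \<epsilon> \<le> sqrt n" using A0 e by simp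
      then show ?thesis using e by (simp add: field_simps)
    qed
    moreover have p: "0 \<le> \<epsilon> * sqrt n" using e by simp
    moreover have eq: "\<epsilon> / 2 * sqrt n + \<epsilon> / 4 * sqrt n = 3/4 * (\<epsilon> * sqrt n)" by (simp add: field_simps)
    ultimately show ?thesis using split T by linarith
  qed
  then show ?thesis by blast
qed

context CJ begin

definition cyl :: "nat \<Rightarrow> (nat \<Rightarrow> real) set \<Rightarrow> (nat \<Rightarrow> real) set" where
  "cyl m C' = {x \<in> space \<mu>. restrict x {..<m} \<in> C'}"

definition Cyl :: "(nat \<Rightarrow> real) set set" where
  "Cyl = {C. \<exists>m C'. C' \<in> sets (PiM {..<m} \<nu>) \<and> C = cyl m C'}"

lemma cyl_sets:
  assumes "C' \<in> sets (PiM {..<m} \<nu>)"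
  shows "cyl m C' \<in> sets \<mu>"
proof -
  have "cyl m C' = (\<lambda>x. restrict x {..<m}) -` C' \<inter> space \<mu>" unfolding cyl_def by auto
  then show ?thesis using measurable_sets[OF measurable_restrict_subset[of "{..<m}" UNIV \<nu>] assms] by simp
qed

lemma Cyl_sets: "C \<in> Cyl \<Longrightarrow> C \<in> sets \<mu>"
  unfolding Cyl_def using cyl_sets by auto

lemma restr_space: "x \<in> space \<mu> \<Longrightarrow> restrict x {..<m} \<in> space (PiM {..<m} \<nu>)"
  using measurable_space[OF measurable_restrict_subset[of "{..<m}" UNIV \<nu>]] by auto

lemma cyl_lift:
  assumes C': "C' \<in> sets (PiM {..<m} \<nu>)" and mm: "m \<le> m'"
  shows "(\<lambda>y. restrict y {..<m}) -` C' \<inter> space (PiM {..<m'} \<nu>) \<in> sets (PiM {..<m'} \<nu>)"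
    and "cyl m C' = cyl m' ((\<lambda>y. restrict y {..<m}) -` C' \<inter> space (PiM {..<m'} \<nu>))"
proof -
  show "(\<lambda>y. restrict y {..<m}) -` C' \<inter> space (PiM {..<m'} \<nu>) \<in> sets (PiM {..<m'} \<nu>)"
    using measurable_sets[OF measurable_restrict_subset[of "{..<m}" "{..<m'}" \<nu>] C'] mm by auto
  have rr: "restrict (restrict x {..<m'}) {..<m} = restrict x {..<m}" for x :: "nat \<Rightarrow> real"
    by (rule restrict_restrict_sub) (use mm in auto)
  show "cyl m C' = cyl m' ((\<lambda>y. restrict y {..<m}) -` C' \<inter> space (PiM {..<m'} \<nu>))"
    unfolding cyl_def using restr_space rr by auto
qed

lemma Cyl_lift:
  assumes "C \<in> Cyl"
  obtains m0 where "\<And>m'. m' \<ge> m0 \<Longrightarrow> \<exists>C'. C' \<in> sets (PiM {..<m'} \<nu>) \<and> C = cyl m' C'"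
proof -
  from assms obtain m C' where C': "C' \<in> sets (PiM {..<m} \<nu>)" "C = cyl m C'" unfolding Cyl_def by auto
  show ?thesis
    by (rule that[of m]) (use cyl_lift[OF C'(1)] C'(2) in blast)
qed

lemma Cyl_Un:
  assumes "C \<in> Cyl" "D \<in> Cyl"
  shows "C \<union> D \<in> Cyl"
proof -
  obtain m1 where m1: "\<And>m'. m' \<ge> m1 \<Longrightarrow> \<exists>C'. C' \<in> sets (PiM {..<m'} \<nu>) \<and> C = cyl m' C'"
    using Cyl_lift[OF assms(1)] by blast
  obtain m2 where m2: "\<And>m'. m' \<ge> m2 \<Longrightarrow> \<exists>C'. C' \<in> sets (PiM {..<m'} \<nu>) \<and> D = cyl m' C'"
    using Cyl_lift[OF assms(2)] by blast
  obtain C' where C': "C' \<in> sets (PiM {..<max m1 m2} \<nu>)" "C = cyl (max m1 m2) C'" using m1[of "max m1 m2"] by auto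
  obtain D' where D': "D' \<in> sets (PiM {..<max m1 m2} \<nu>)" "D = cyl (max m1 m2) D'" using m2[of "max m1 m2"] by auto
  have "C \<union> D = cyl (max m1 m2) (C' \<union> D')" unfolding C'(2) D'(2) cyl_def by auto
  moreover have "C' \<union> D' \<in> sets (PiM {..<max m1 m2} \<nu>)" using C' D' by auto
  ultimately show ?thesis unfolding Cyl_def by blast
qed

lemma Cyl_compl:
  assumes "C \<in> Cyl"
  shows "space \<mu> - C \<in> Cyl"
proof -
  from assms obtain m C' where C': "C' \<in> sets (PiM {..<m} \<nu>)" "C = cyl m C'" unfolding Cyl_def by auto
  have "space \<mu> - C = cyl m (space (PiM {..<m} \<nu>) - C')"
    unfolding C'(2) cyl_def using restr_space by auto
  moreover have "space (PiM {..<m} \<nu>) - C' \<in> sets (PiM {..<m} \<nu>)" using C' by auto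
  ultimately show ?thesis unfolding Cyl_def by blast
qed

lemma Cyl_empty: "{} \<in> Cyl"
proof -
  have "{} = cyl 0 {}" unfolding cyl_def by auto
  then show ?thesis unfolding Cyl_def by blast
qed

lemma Cyl_finite_Un: "(\<And>i::nat. i < K \<Longrightarrow> C i \<in> Cyl) \<Longrightarrow> (\<Union>i<K. C i) \<in> Cyl"
proof (induction K)
  case 0 then show ?case using Cyl_empty by simp
next
  case (Suc K)
  have "(\<Union>i<Suc K. C i) = (\<Union>i<K. C i) \<union> C K" by (auto simp: lessThan_Suc)
  then show ?case using Suc Cyl_Un by simp
qed

lemma Cyl_gen:
  assumes "a \<in> prod_algebra UNIV \<nu>"
  shows "a \<in> Cyl"
proof -
  obtain J E where JE: "a = prod_emb UNIV \<nu> J (\<Pi>\<^sub>E j\<in>J. E j)" "finite J" "\<And>i. i \<in> J \<Longrightarrow> E i \<in> sets (\<nu> i)"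
    using prod_algebraE[OF assms] by metis
  define m where "m = Suc (Max (insert 0 J))"
  have Jm: "J \<subseteq> {..<m}" using JE(2) unfolding m_def by (auto simp: less_Suc_eq_le)
  define C' where "C' = prod_emb {..<m} \<nu> J (\<Pi>\<^sub>E j\<in>J. E j)"
  have C'm: "C' \<in> sets (PiM {..<m} \<nu>)" unfolding C'_def by (rule sets_PiM_I) (use JE Jm in auto)
  have "a = cyl m C'"
  proof -
    have rr: "restrict (restrict x {..<m}) J = restrict x J" for x :: "nat \<Rightarrow> real"
      by (rule restrict_restrict_sub[OF Jm])
    show ?thesis unfolding JE(1) C'_def cyl_def prod_emb_def using rr restr_space
      by (auto simp: space_PiM)
  qed
  then show ?thesis using C'm unfolding Cyl_def by blast
qed

definition sd :: "'a set \<Rightarrow> 'a set \<Rightarrow> 'a set" where "sd E C = (E - C) \<union> (C - E)"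

lemma approx:
  assumes E: "E \<in> sets \<mu>" and e: "\<epsilon> > 0"
  shows "\<exists>C\<in>Cyl. measure \<mu> (sd E C) < \<epsilon>"
proof -
  have "E \<in> sigma_sets (space \<mu>) (prod_algebra UNIV \<nu>)" using E sets_PiM[of UNIV \<nu>] by (simp add: space_PiM)
  then show ?thesis using e
  proof (induction arbitrary: \<epsilon>)
    case (Basic a)
    then have "a \<in> Cyl" using Cyl_gen by auto
    moreover have "sd a a = {}" unfolding sd_def by auto
    then have "measure \<mu> (sd a a) < \<epsilon>" using Basic.prems by simp
    ultimately show ?case by blast
  next
    case Empty
    have "sd {} {} = ({} :: (nat \<Rightarrow> real) set)" unfolding sd_def by auto
    then have "measure \<mu> (sd {} {}) < \<epsilon>" using Empty.prems by simp
    then show ?case using Cyl_empty by blast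
  next
    case (Compl a)
    obtain C where C: "C \<in> Cyl" "measure \<mu> (sd a C) < \<epsilon>" using Compl by blast
    have "a \<in> sets \<mu>" using Compl.hyps sets_PiM[of UNIV \<nu>] by (simp add: space_PiM)
    then have asub: "a \<subseteq> space \<mu>" by (rule sets.sets_into_space)
    have Csub: "C \<subseteq> space \<mu>" using Cyl_sets[OF C(1)] sets.sets_into_space by auto
    have "sd (space \<mu> - a) (space \<mu> - C) = sd a C" unfolding sd_def using asub Csub by auto
    moreover have "(space (PiM UNIV \<nu>) - C) \<in> Cyl" by (rule Cyl_compl[OF C(1)])
    ultimately show ?case using C(2) by (metis space_PiM)
  next
    case (Union A)
    have As: "A i \<in> sets \<mu>" for i using Union.hyps sets_PiM[of UNIV \<nu>] by (simp add: space_PiM)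
    define B where "B K = (\<Union>i<K. A i)" for K
    have Bs: "B K \<in> sets \<mu>" for K unfolding B_def using As by auto
    have incB: "incseq B" unfolding B_def incseq_def by (auto intro: less_le_trans)
    have UB: "(\<Union>K. B K) = (\<Union>i. A i)" unfolding B_def by auto
    have lim: "(\<lambda>K. measure \<mu> (B K)) \<longlonglongrightarrow> measure \<mu> (\<Union>i. A i)"
      using P.P.finite_Lim_measure_incseq[of B] Bs incB UB by auto
    have e2: "\<epsilon>/2 > 0" using Union.prems by simp
    obtain K where K: "\<bar>measure \<mu> (B K) - measure \<mu> (\<Union>i. A i)\<bar> < \<epsilon>/2"
      using LIMSEQ_D[OF lim e2] by (auto simp: dist_real_def)
    have Us: "(\<Union>i. A i) \<in> sets \<mu>" using As by auto
    have BU: "B K \<subseteq> (\<Union>i. A i)" unfolding B_def by auto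
    have m1: "measure \<mu> ((\<Union>i. A i) - B K) < \<epsilon>/2"
      using P.P.finite_measure_Diff[OF Us Bs BU] K by (simp add: abs_if split: if_splits)
    define e' where "e' = \<epsilon> / (2 * (real K + 1))"
    have e'p: "e' > 0" unfolding e'_def using Union.prems by simp
    have "\<forall>i. \<exists>C. C \<in> Cyl \<and> measure \<mu> (sd (A i) C) < e'" using Union.IH e'p by blast
    then obtain C where C: "\<And>i. C i \<in> Cyl" "\<And>i. measure \<mu> (sd (A i) (C i)) < e'" by metis
    define D where "D = (\<Union>i<K. C i)"
    have DC: "D \<in> Cyl" unfolding D_def by (rule Cyl_finite_Un) (use C in auto)
    have Cs: "C i \<in> sets \<mu>" for i using Cyl_sets C by auto
    have sds: "sd (A i) (C i) \<in> sets \<mu>" for i unfolding sd_def using As Cs by auto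
    have sub: "sd (\<Union>i. A i) D \<subseteq> ((\<Union>i. A i) - B K) \<union> (\<Union>i<K. sd (A i) (C i))"
      unfolding sd_def D_def B_def by auto
    have "measure \<mu> (sd (\<Union>i. A i) D) \<le> measure \<mu> (((\<Union>i. A i) - B K) \<union> (\<Union>i<K. sd (A i) (C i)))"
      by (rule P.P.finite_measure_mono[OF sub]) (use Us Bs sds in auto)
    also have "\<dots> \<le> measure \<mu> ((\<Union>i. A i) - B K) + measure \<mu> (\<Union>i<K. sd (A i) (C i))"
      by (rule measure_subadditive) (use Us Bs sds in auto)
    also have "measure \<mu> (\<Union>i<K. sd (A i) (C i)) \<le> (\<Sum>i<K. measure \<mu> (sd (A i) (C i)))"
      by (rule P.P.finite_measure_subadditive_finite) (use sds in auto)
    also have "(\<Sum>i<K. measure \<mu> (sd (A i) (C i))) \<le> (\<Sum>i<K. e')"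
      by (rule sum_mono) (use C(2) in \<open>auto intro: less_imp_le\<close>)
    also have "(\<Sum>i<K. e') = real K * e'" by simp
    also have "real K * e' < \<epsilon>/2"
      unfolding e'_def using Union.prems by (simp add: field_simps)
    finally have "measure \<mu> (sd (\<Union>i. A i) D) < \<epsilon>" using m1 by linarith
    then show ?case using DC by blast
  qed
qed

end

lemma lim_char:
  fixes X :: "nat \<Rightarrow> real"
  shows "(X \<longlonglongrightarrow> 1) \<longleftrightarrow> (\<forall>j::nat. \<exists>N. \<forall>k\<ge>N. \<bar>X k - 1\<bar> < 1 / real (Suc j))"
proof
  assume "X \<longlonglongrightarrow> 1"
  then show "\<forall>j::nat. \<exists>N. \<forall>k\<ge>N. \<bar>X k - 1\<bar> < 1 / real (Suc j)"
    unfolding LIMSEQ_iff by (auto simp del: of_nat_Suc)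
next
  assume a: "\<forall>j::nat. \<exists>N. \<forall>k\<ge>N. \<bar>X k - 1\<bar> < 1 / real (Suc j)"
  show "X \<longlonglongrightarrow> 1"
    unfolding LIMSEQ_iff
  proof (intro allI impI)
    fix r :: real assume r: "0 < r"
    obtain j where j: "inverse (real (Suc j)) < r" using reals_Archimedean[OF r] by blast
    obtain N where "\<forall>k\<ge>N. \<bar>X k - 1\<bar> < 1 / real (Suc j)" using a by blast
    then have "\<forall>k\<ge>N. norm (X k - 1) < r" using j by (auto simp: inverse_eq_divide)
    then show "\<exists>no. \<forall>n\<ge>no. norm (X n - 1) < r" by blast
  qed
qed

context CJ begin

lemma space_mu: "space \<mu> = {p. \<forall>i. p i \<in> {0..1}}"
  by (auto simp: space_PiM nu_space PiE_def)

lemma CJP_eq: "CJP_set = {x \<in> space \<mu>. \<forall>j::nat. \<exists>N::nat. \<forall>k\<ge>N. \<bar>maj_prob x (2*k+1) - 1\<bar> < 1 / real (Suc j)}"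
  unfolding CJP_set_def space_mu lim_char by blast

lemma CJP_sets: "CJP_set \<in> sets \<mu>"
proof -
  note maj_meas[measurable]
  have "{x \<in> space \<mu>. \<forall>j::nat. \<exists>N::nat. \<forall>k\<ge>N. \<bar>maj_prob x (2*k+1) - 1\<bar> < 1 / real (Suc j)} \<in> sets \<mu>"
    by measurable
  then show ?thesis unfolding CJP_eq .
qed

lemma cyl_bound:
  assumes small: "\<And>\<epsilon>. \<epsilon> > 0 \<Longrightarrow> \<exists>n0. \<forall>n\<ge>n0. (\<Sum>i<n. \<bar>qm i - 1/2\<bar>) \<le> \<epsilon> * sqrt n"
    and C': "C' \<in> sets (PiM {..<m} \<nu>)"
  shows "measure \<mu> (CJP_set \<inter> cyl m C') \<le> 3/4 * measure \<mu> (cyl m C')"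
proof -
  let ?A = "CJP_set"
  let ?h = "\<lambda>x. indicator C' (restrict x {..<m}) :: real"
  obtain n0 where n0: "\<And>n. n \<ge> n0 \<Longrightarrow> G qm m (n - m) (real n / 2 - real m) \<le> 3/4"
    using AN[OF q_unit small, of m] by blast
  have As: "?A \<in> sets \<mu>" by (rule CJP_sets)
  have Cs: "cyl m C' \<in> sets \<mu>" by (rule cyl_sets[OF C'])
  have hC: "?h x = indicator (cyl m C') x" if "x \<in> space \<mu>" for x
    using that unfolding cyl_def by (auto simp: indicator_def)
  define s where "s k x = indicator ?A x * ?h x * maj_prob x (2*k+1)" for k x
  define f where "f x = indicator ?A x * ?h x" for x
  have hm: "?h \<in> borel_measurable \<mu>" by (rule hC_meas_mu[OF C'])
  have Am: "(indicator ?A :: _ \<Rightarrow> real) \<in> borel_measurable \<mu>" using As by simp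
  have fm: "f \<in> borel_measurable \<mu>" unfolding f_def using hm Am by simp
  have sm: "s k \<in> borel_measurable \<mu>" for k unfolding s_def using hm Am maj_meas by simp
  have lim: "AE x in \<mu>. (\<lambda>k. s k x) \<longlonglongrightarrow> f x"
  proof (rule AE_I2)
    fix x assume x: "x \<in> space \<mu>"
    show "(\<lambda>k. s k x) \<longlonglongrightarrow> f x"
    proof (cases "x \<in> ?A")
      case True
      then have "(\<lambda>k. maj_prob x (2*k+1)) \<longlonglongrightarrow> 1" unfolding CJP_set_def by auto
      then have "(\<lambda>k. ?h x * maj_prob x (2*k+1)) \<longlonglongrightarrow> ?h x * 1" by (intro tendsto_mult tendsto_const)
      then show ?thesis using True unfolding s_def f_def by simp
    next
      case False
      then show ?thesis unfolding s_def f_def by simp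
    qed
  qed
  have bound: "AE x in \<mu>. norm (s k x) \<le> 1" for k
  proof (rule AE_I2)
    fix x assume x: "x \<in> space \<mu>"
    have "\<bar>indicator ?A x * ?h x\<bar> \<le> 1" by (auto simp: indicator_def)
    moreover have "\<bar>maj_prob x (2*k+1)\<bar> \<le> 1" using maj_bounds[OF x] by auto
    ultimately have "\<bar>indicator ?A x * ?h x\<bar> * \<bar>maj_prob x (2*k+1)\<bar> \<le> 1 * 1"
      by (intro mult_mono) auto
    then show "norm (s k x) \<le> 1" unfolding s_def by (simp add: abs_mult)
  qed
  have conv: "(\<lambda>k. \<integral>x. s k x \<partial>\<mu>) \<longlonglongrightarrow> (\<integral>x. f x \<partial>\<mu>)"
    by (rule integral_dominated_convergence[OF fm sm _ lim bound]) simp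
  have fint: "(\<integral>x. f x \<partial>\<mu>) = measure \<mu> (?A \<inter> cyl m C')"
  proof -
    have "(\<integral>x. f x \<partial>\<mu>) = (\<integral>x. indicator (?A \<inter> cyl m C') x \<partial>\<mu>)"
      by (rule Bochner_Integration.integral_cong[OF refl]) (simp add: f_def hC indicator_inter_arith)
    also have "\<dots> = measure \<mu> (?A \<inter> cyl m C')" using As Cs sets.sets_into_space by (simp add: Int_absorb2)
    finally show ?thesis .
  qed
  have hint: "(\<integral>x. ?h x \<partial>\<mu>) = measure \<mu> (cyl m C')"
  proof -
    have "(\<integral>x. ?h x \<partial>\<mu>) = (\<integral>x. indicator (cyl m C') x \<partial>\<mu>)"
      by (rule Bochner_Integration.integral_cong[OF refl]) (simp add: hC)
    also have "\<dots> = measure \<mu> (cyl m C')" using Cs sets.sets_into_space by (simp add: Int_absorb2)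
    finally show ?thesis .
  qed
  have ev: "\<forall>k\<ge>n0 + m. (\<integral>x. s k x \<partial>\<mu>) \<le> 3/4 * measure \<mu> (cyl m C')"
  proof (intro allI impI)
    fix k assume k: "k \<ge> n0 + m"
    let ?n = "2*k+1"
    have "(\<integral>x. s k x \<partial>\<mu>) \<le> (\<integral>x. ?h x * maj_prob x ?n \<partial>\<mu>)"
    proof (rule integral_mono)
      show "integrable \<mu> (s k)"
        by (rule bounded_int[where B=1]) (use sm maj_bounds in \<open>force simp: s_def indicator_def\<close>)+
      show "integrable \<mu> (\<lambda>x. ?h x * maj_prob x ?n)"
        by (rule bounded_int[where B=1]) (use hm maj_meas maj_bounds in \<open>auto simp: indicator_def\<close>)
      fix x assume x: "x \<in> space \<mu>"
      have "0 \<le> ?h x * maj_prob x ?n" using maj_bounds[OF x] by (simp add: indicator_def)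
      then show "s k x \<le> ?h x * maj_prob x ?n" unfolding s_def by (auto simp: indicator_def)
    qed
    also have "\<dots> \<le> (\<integral>x. ?h x \<partial>\<mu>) * G qm m (?n - m) (real ?n / 2 - real m)"
      by (rule CB[OF C']) (use k in simp)
    also have "\<dots> \<le> (\<integral>x. ?h x \<partial>\<mu>) * (3/4)"
      by (rule mult_left_mono) (use n0[of ?n] k in \<open>auto simp: hint\<close>)
    finally show "(\<integral>x. s k x \<partial>\<mu>) \<le> 3/4 * measure \<mu> (cyl m C')" by (simp add: hint)
  qed
  have "(\<integral>x. f x \<partial>\<mu>) \<le> 3/4 * measure \<mu> (cyl m C')"
    by (rule LIMSEQ_le_const2[OF conv]) (use ev in blast)
  then show ?thesis using fint by simp
qed

lemma main:
  assumes small: "\<And>\<epsilon>. \<epsilon> > 0 \<Longrightarrow> \<exists>n0. \<forall>n\<ge>n0. (\<Sum>i<n. \<bar>qm i - 1/2\<bar>) \<le> \<epsilon> * sqrt n"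
  shows "CJP_set \<in> sets \<mu> \<and> emeasure \<mu> CJP_set = 0"
proof -
  let ?A = "CJP_set"
  have As: "?A \<in> sets \<mu>" by (rule CJP_sets)
  have "measure \<mu> ?A \<le> 0"
  proof (rule field_le_epsilon)
    fix e :: real assume e: "0 < e"
    have e7: "e / 7 > 0" using e by simp
    obtain C where C: "C \<in> Cyl" "measure \<mu> (sd ?A C) < e / 7" using approx[OF As e7] by blast
    obtain m C' where mC: "C' \<in> sets (PiM {..<m} \<nu>)" "C = cyl m C'" using C(1) unfolding Cyl_def by auto
    have Cs: "C \<in> sets \<mu>" by (rule Cyl_sets[OF C(1)])
    have sds: "sd ?A C \<in> sets \<mu>" unfolding sd_def using As Cs by auto
    have b1: "measure \<mu> (?A \<inter> C) \<le> 3/4 * measure \<mu> C" using cyl_bound[OF small mC(1)] mC(2) by simp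
    have "measure \<mu> ?A \<le> measure \<mu> ((?A \<inter> C) \<union> sd ?A C)"
      by (rule P.P.finite_measure_mono) (use As Cs sds in \<open>auto simp: sd_def\<close>)
    also have "\<dots> \<le> measure \<mu> (?A \<inter> C) + measure \<mu> (sd ?A C)"
      by (rule measure_subadditive) (use As Cs sds in auto)
    finally have a1: "measure \<mu> ?A \<le> measure \<mu> (?A \<inter> C) + measure \<mu> (sd ?A C)" .
    have "measure \<mu> C \<le> measure \<mu> (?A \<union> sd ?A C)"
      by (rule P.P.finite_measure_mono) (use As Cs sds in \<open>auto simp: sd_def\<close>)
    also have "\<dots> \<le> measure \<mu> ?A + measure \<mu> (sd ?A C)"
      by (rule measure_subadditive) (use As Cs sds in auto)
    finally have a2: "measure \<mu> C \<le> measure \<mu> ?A + measure \<mu> (sd ?A C)" .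
    show "measure \<mu> ?A \<le> 0 + e" using a1 a2 b1 C(2) by linarith
  qed
  then have "measure \<mu> ?A = 0" using measure_nonneg[of \<mu> ?A] by linarith
  then show ?thesis using As by (simp add: P.P.emeasure_eq_measure)
qed

end

theorem theorem1:
  fixes \<nu> :: "nat \<Rightarrow> real measure"
  assumes "centered \<nu>"
  shows "CJP_set \<in> sets (PiM UNIV \<nu>) \<and> emeasure (PiM UNIV \<nu>) CJP_set = 0"
proof -
  from assms obtain \<nu>0 d where pu: "\<And>n. prob_on_unit (\<nu> n)" and p0: "prob_on_unit \<nu>0"
    and mean0: "(\<integral>x. x \<partial>\<nu>0) = 1/2" and dD: "d \<in> class_D" and sumd: "(\<Sum>n. d (\<nu> n) \<nu>0) < \<top>"
    unfolding centered_def by blast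
  obtain C where C: "C > 0" "\<And>a b. prob_on_unit a \<Longrightarrow> prob_on_unit b \<Longrightarrow> ennreal (1 - hellinger a b) \<le> ennreal C * d a b"
    using dD unfolding class_D_def by blast
  interpret CJ \<nu> by unfold_locales (rule pu)
  have bnd: "ennreal ((qm n - 1/2)^2) \<le> ennreal (2 * C) * d (\<nu> n) \<nu>0" for n
  proof -
    have "(qm n - 1/2)^2 \<le> 2 * (1 - hellinger (\<nu> n) \<nu>0)"
      using hell_bound[OF pu[of n] p0] unfolding qm_def mean0 .
    then have "ennreal ((qm n - 1/2)^2) \<le> ennreal (2 * (1 - hellinger (\<nu> n) \<nu>0))" by (rule ennreal_leI)
    also have "\<dots> = ennreal 2 * ennreal (1 - hellinger (\<nu> n) \<nu>0)"
    proof (cases "0 \<le> 1 - hellinger (\<nu> n) \<nu>0")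
      case True then show ?thesis by (simp only: ennreal_mult)
    next
      case False then show ?thesis by (simp add: ennreal_neg)
    qed
    also have "\<dots> \<le> ennreal 2 * (ennreal C * d (\<nu> n) \<nu>0)"
      by (rule mult_left_mono) (use C(2)[OF pu[of n] p0] in auto)
    also have "\<dots> = ennreal (2 * C) * d (\<nu> n) \<nu>0" using C(1) by (simp add: ennreal_mult mult.assoc)
    finally show ?thesis .
  qed
  have "(\<Sum>n. ennreal ((qm n - 1/2)^2)) \<le> (\<Sum>n. ennreal (2 * C) * d (\<nu> n) \<nu>0)"
    by (rule suminf_le[OF bnd]) auto
  also have "\<dots> = ennreal (2 * C) * (\<Sum>n. d (\<nu> n) \<nu>0)" by simp
  also have "\<dots> < \<top>" using sumd by (simp add: ennreal_mult_less_top)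
  finally have "(\<Sum>n. ennreal ((qm n - 1/2)^2)) \<noteq> \<top>" by simp
  then have sm: "summable (\<lambda>n. (qm n - 1/2)^2)" by (rule summable_suminf_not_top[rotated]) simp
  have small: "\<And>\<epsilon>. \<epsilon> > 0 \<Longrightarrow> \<exists>n0. \<forall>n\<ge>n0. (\<Sum>i<n. \<bar>qm i - 1/2\<bar>) \<le> \<epsilon> * sqrt n"
    using small_from_summable[OF sm] by blast
  show ?thesis by (rule main[OF small])
qed

end
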